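(* For every finite set $Q$, the category $\mathbf{Lam}_Q$ is cartesian closed and the quotient functor $\pi_Q \colon \mathbf{Lam} \to \mathbf{Lam}_Q$ (identity on objects, sending a term to its $\sim_Q$-class) is a cartesian closed functor. Moreover, every partial surjection $f \colon Q \twoheadrightarrow Q'$ between finite sets induces a cartesian closed identity-on-objects functor $\mathbf{Lam}_f \colon \mathbf{Lam}_Q \to \mathbf{Lam}_{Q'}$ such that $\mathbf{Lam}_f \circ \pi_Q = \pi_{Q'}$.
   Context: Simple types are built from a base type $o$ (with the type constructors of the simply typed $\lambda$-calculus, so that $\mathbf{Lam}$ is the free cartesian closed category on one object). $\Lambda(A)$ is the set of closed $\lambda$-terms of type $A$ modulo $\beta\eta$; $\mathbf{Lam}$ has simple types as objects and $\mathbf{Lam}(A,B) = \Lambda(A\Rightarrow B)$. For a finite set $Q$, $[\![-]\!]_Q$ is the standard interpretation in finite sets with $[\![o]\!]_Q = Q$ and $[\![A\Rightarrow B]\!]_Q$ all functions. For each type $A$, $M \sim_Q^A N$ iff $[\![M]\!]_Q = [\![N]\!]_Q$; these relations form a congruence on $\mathbf{Lam}$, and $\mathbf{Lam}_Q = \mathbf{Lam}/\sim_Q$, i.e. $\mathbf{Lam}_Q(A,B) = \Lambda(A\Rightarrow B)/\sim_Q^{A\Rightarrow B}$. A partial surjection $f\colon Q\twoheadrightarrow Q'$ is a relation that is the graph of a partial function surjective onto $Q'$. *)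

theory Defs
  imports Main "HOL-Library.FSet"
begin

datatype ty = TyO | TyOne | TyProd ty ty | TyArr ty ty

datatype tm = TVar nat | TAbs ty tm | TApp tm tm | TUnit | TPair tm tm | TFst tm | TSnd tm

inductive typing :: "ty list \<Rightarrow> tm \<Rightarrow> ty \<Rightarrow> bool" where
  t_var: "i < length \<Gamma> \<Longrightarrow> typing \<Gamma> (TVar i) (\<Gamma> ! i)"
| t_abs: "typing (A # \<Gamma>) M B \<Longrightarrow> typing \<Gamma> (TAbs A M) (TyArr A B)"
| t_app: "typing \<Gamma> M (TyArr A B) \<Longrightarrow> typing \<Gamma> N A \<Longrightarrow> typing \<Gamma> (TApp M N) B"
| t_unit: "typing \<Gamma> TUnit TyOne"
| t_pair: "typing \<Gamma> M A \<Longrightarrow> typing \<Gamma> N B \<Longrightarrow> typing \<Gamma> (TPair M N) (TyProd A B)"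
| t_fst: "typing \<Gamma> M (TyProd A B) \<Longrightarrow> typing \<Gamma> (TFst M) A"
| t_snd: "typing \<Gamma> M (TyProd A B) \<Longrightarrow> typing \<Gamma> (TSnd M) B"

primrec lift :: "nat \<Rightarrow> tm \<Rightarrow> tm" where
  "lift k (TVar i) = (if i < k then TVar i else TVar (Suc i))"
| "lift k (TAbs A M) = TAbs A (lift (Suc k) M)"
| "lift k (TApp M N) = TApp (lift k M) (lift k N)"
| "lift k TUnit = TUnit"
| "lift k (TPair M N) = TPair (lift k M) (lift k N)"
| "lift k (TFst M) = TFst (lift k M)"
| "lift k (TSnd M) = TSnd (lift k M)"

primrec subst :: "tm \<Rightarrow> nat \<Rightarrow> tm \<Rightarrow> tm" where
  "subst (TVar i) k N = (if i < k then TVar i else if i = k then N else TVar (i - 1))"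
| "subst (TAbs A M) k N = TAbs A (subst M (Suc k) (lift 0 N))"
| "subst (TApp M M') k N = TApp (subst M k N) (subst M' k N)"
| "subst TUnit k N = TUnit"
| "subst (TPair M M') k N = TPair (subst M k N) (subst M' k N)"
| "subst (TFst M) k N = TFst (subst M k N)"
| "subst (TSnd M) k N = TSnd (subst M k N)"

text \<open>Typed beta-eta equality (equational theory of the free CCC on one object).\<close>
inductive beq :: "ty list \<Rightarrow> tm \<Rightarrow> tm \<Rightarrow> ty \<Rightarrow> bool" where
  beq_refl: "typing \<Gamma> M A \<Longrightarrow> beq \<Gamma> M M A"
| beq_sym: "beq \<Gamma> M N A \<Longrightarrow> beq \<Gamma> N M A"
| beq_trans: "beq \<Gamma> M N A \<Longrightarrow> beq \<Gamma> N K A \<Longrightarrow> beq \<Gamma> M K A"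
| beq_abs: "beq (A # \<Gamma>) M M' B \<Longrightarrow> beq \<Gamma> (TAbs A M) (TAbs A M') (TyArr A B)"
| beq_app: "beq \<Gamma> M M' (TyArr A B) \<Longrightarrow> beq \<Gamma> N N' A \<Longrightarrow> beq \<Gamma> (TApp M N) (TApp M' N') B"
| beq_pair: "beq \<Gamma> M M' A \<Longrightarrow> beq \<Gamma> N N' B \<Longrightarrow> beq \<Gamma> (TPair M N) (TPair M' N') (TyProd A B)"
| beq_fst: "beq \<Gamma> M M' (TyProd A B) \<Longrightarrow> beq \<Gamma> (TFst M) (TFst M') A"
| beq_snd: "beq \<Gamma> M M' (TyProd A B) \<Longrightarrow> beq \<Gamma> (TSnd M) (TSnd M') B"
| beq_beta: "typing (A # \<Gamma>) M B \<Longrightarrow> typing \<Gamma> N A \<Longrightarrow> beq \<Gamma> (TApp (TAbs A M) N) (subst M 0 N) B"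
| beq_eta: "typing \<Gamma> M (TyArr A B) \<Longrightarrow> beq \<Gamma> (TAbs A (TApp (lift 0 M) (TVar 0))) M (TyArr A B)"
| beq_fst_pair: "typing \<Gamma> M A \<Longrightarrow> typing \<Gamma> N B \<Longrightarrow> beq \<Gamma> (TFst (TPair M N)) M A"
| beq_snd_pair: "typing \<Gamma> M A \<Longrightarrow> typing \<Gamma> N B \<Longrightarrow> beq \<Gamma> (TSnd (TPair M N)) N B"
| beq_surj_pair: "typing \<Gamma> M (TyProd A B) \<Longrightarrow> beq \<Gamma> (TPair (TFst M) (TSnd M)) M (TyProd A B)"
| beq_unit_eta: "typing \<Gamma> M TyOne \<Longrightarrow> beq \<Gamma> M TUnit TyOne"

text \<open>Universe of semantic values; functions are represented by their (finite) graphs.\<close>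
datatype 'q val = VB 'q | VU | VP "'q val" "'q val" | VF "('q val \<times> 'q val) fset"

primrec sdom :: "'q set \<Rightarrow> ty \<Rightarrow> 'q val set" where
  "sdom Q TyO = VB ` Q"
| "sdom Q TyOne = {VU}"
| "sdom Q (TyProd A B) = {VP a b | a b. a \<in> sdom Q A \<and> b \<in> sdom Q B}"
| "sdom Q (TyArr A B) = {VF g | g. \<exists>h. (\<forall>a\<in>sdom Q A. h a \<in> sdom Q B)
                                          \<and> fset g = (\<lambda>a. (a, h a)) ` sdom Q A}"

definition vapp :: "'q val \<Rightarrow> 'q val \<Rightarrow> 'q val" where
  "vapp f v = (case f of VF g \<Rightarrow> (THE w. (v, w) \<in> fset g) | _ \<Rightarrow> undefined)"

definition vfst :: "'q val \<Rightarrow> 'q val" where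
  "vfst v = (case v of VP a b \<Rightarrow> a | _ \<Rightarrow> undefined)"

definition vsnd :: "'q val \<Rightarrow> 'q val" where
  "vsnd v = (case v of VP a b \<Rightarrow> b | _ \<Rightarrow> undefined)"

primrec eval :: "tm \<Rightarrow> 'q set \<Rightarrow> 'q val list \<Rightarrow> 'q val" where
  "eval (TVar i) Q \<rho> = \<rho> ! i"
| "eval (TAbs A M) Q \<rho> = VF (Abs_fset ((\<lambda>v. (v, eval M Q (v # \<rho>))) ` sdom Q A))"
| "eval (TApp M N) Q \<rho> = vapp (eval M Q \<rho>) (eval N Q \<rho>)"
| "eval TUnit Q \<rho> = VU"
| "eval (TPair M N) Q \<rho> = VP (eval M Q \<rho>) (eval N Q \<rho>)"
| "eval (TFst M) Q \<rho> = vfst (eval M Q \<rho>)"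
| "eval (TSnd M) Q \<rho> = vsnd (eval M Q \<rho>)"

definition sem :: "'q set \<Rightarrow> tm \<Rightarrow> 'q val" where
  "sem Q M = eval M Q []"

record ('o, 'm) cat =
  Obj :: "'o set"
  Hom :: "'o \<Rightarrow> 'o \<Rightarrow> 'm set"
  Idm :: "'o \<Rightarrow> 'm"
  Cmp :: "'o \<Rightarrow> 'o \<Rightarrow> 'o \<Rightarrow> 'm \<Rightarrow> 'm \<Rightarrow> 'm"  \<comment> \<open>Cmp A B C g f = g o f for f : A -> B, g : B -> C\<close>

definition is_category :: "('o, 'm) cat \<Rightarrow> bool" where
  "is_category C \<longleftrightarrow>
     (\<forall>A\<in>Obj C. Idm C A \<in> Hom C A A) \<and>
     (\<forall>A\<in>Obj C. \<forall>B\<in>Obj C. \<forall>D\<in>Obj C. \<forall>f\<in>Hom C A B. \<forall>g\<in>Hom C B D.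
        Cmp C A B D g f \<in> Hom C A D) \<and>
     (\<forall>A\<in>Obj C. \<forall>B\<in>Obj C. \<forall>f\<in>Hom C A B.
        Cmp C A B B (Idm C B) f = f \<and> Cmp C A A B f (Idm C A) = f) \<and>
     (\<forall>A\<in>Obj C. \<forall>B\<in>Obj C. \<forall>D\<in>Obj C. \<forall>E\<in>Obj C.
        \<forall>f\<in>Hom C A B. \<forall>g\<in>Hom C B D. \<forall>h\<in>Hom C D E.
        Cmp C A D E h (Cmp C A B D g f) = Cmp C A B E (Cmp C B D E h g) f)"

definition is_terminal :: "('o, 'm) cat \<Rightarrow> 'o \<Rightarrow> bool" where
  "is_terminal C T \<longleftrightarrow> T \<in> Obj C \<and> (\<forall>X\<in>Obj C. \<exists>!h. h \<in> Hom C X T)"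

definition is_product :: "('o, 'm) cat \<Rightarrow> 'o \<Rightarrow> 'o \<Rightarrow> 'o \<Rightarrow> 'm \<Rightarrow> 'm \<Rightarrow> bool" where
  "is_product C A B P p1 p2 \<longleftrightarrow>
     P \<in> Obj C \<and> p1 \<in> Hom C P A \<and> p2 \<in> Hom C P B \<and>
     (\<forall>X\<in>Obj C. \<forall>f\<in>Hom C X A. \<forall>g\<in>Hom C X B.
        \<exists>!h. h \<in> Hom C X P \<and> Cmp C X P A p1 h = f \<and> Cmp C X P B p2 h = g)"

definition is_exponential ::
  "('o, 'm) cat \<Rightarrow> 'o \<Rightarrow> 'o \<Rightarrow> 'o \<Rightarrow> 'o \<Rightarrow> 'm \<Rightarrow> 'm \<Rightarrow> 'm \<Rightarrow> bool" where
  "is_exponential C A B E P p1 p2 ev \<longleftrightarrow>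
     E \<in> Obj C \<and> is_product C E A P p1 p2 \<and> ev \<in> Hom C P B \<and>
     (\<forall>X\<in>Obj C. \<forall>R r1 r2. is_product C X A R r1 r2 \<longrightarrow>
        (\<forall>f\<in>Hom C R B. \<exists>!h. h \<in> Hom C X E \<and>
           (\<exists>k\<in>Hom C R P. Cmp C R P E p1 k = Cmp C R X E h r1 \<and>
                            Cmp C R P A p2 k = r2 \<and> Cmp C R P B ev k = f)))"

definition cartesian_closed :: "('o, 'm) cat \<Rightarrow> bool" where
  "cartesian_closed C \<longleftrightarrow> is_category C \<and>
     (\<exists>T. is_terminal C T) \<and>
     (\<forall>A\<in>Obj C. \<forall>B\<in>Obj C. \<exists>P p1 p2. is_product C A B P p1 p2) \<and>
     (\<forall>A\<in>Obj C. \<forall>B\<in>Obj C. \<exists>E P p1 p2 ev. is_exponential C A B E P p1 p2 ev)"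

definition is_functor ::
  "('o, 'm) cat \<Rightarrow> ('p, 'n) cat \<Rightarrow> ('o \<Rightarrow> 'p) \<Rightarrow> ('o \<Rightarrow> 'o \<Rightarrow> 'm \<Rightarrow> 'n) \<Rightarrow> bool" where
  "is_functor C D Fo Fm \<longleftrightarrow> is_category C \<and> is_category D \<and>
     (\<forall>A\<in>Obj C. Fo A \<in> Obj D) \<and>
     (\<forall>A\<in>Obj C. \<forall>B\<in>Obj C. \<forall>f\<in>Hom C A B. Fm A B f \<in> Hom D (Fo A) (Fo B)) \<and>
     (\<forall>A\<in>Obj C. Fm A A (Idm C A) = Idm D (Fo A)) \<and>
     (\<forall>A\<in>Obj C. \<forall>B\<in>Obj C. \<forall>E\<in>Obj C. \<forall>f\<in>Hom C A B. \<forall>g\<in>Hom C B E.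
        Fm A E (Cmp C A B E g f) = Cmp D (Fo A) (Fo B) (Fo E) (Fm B E g) (Fm A B f))"

definition cc_functor ::
  "('o, 'm) cat \<Rightarrow> ('p, 'n) cat \<Rightarrow> ('o \<Rightarrow> 'p) \<Rightarrow> ('o \<Rightarrow> 'o \<Rightarrow> 'm \<Rightarrow> 'n) \<Rightarrow> bool" where
  "cc_functor C D Fo Fm \<longleftrightarrow> is_functor C D Fo Fm \<and>
     (\<forall>T. is_terminal C T \<longrightarrow> is_terminal D (Fo T)) \<and>
     (\<forall>A B P p1 p2. A \<in> Obj C \<longrightarrow> B \<in> Obj C \<longrightarrow> is_product C A B P p1 p2 \<longrightarrow>
        is_product D (Fo A) (Fo B) (Fo P) (Fm P A p1) (Fm P B p2)) \<and>
     (\<forall>A B E P p1 p2 ev. A \<in> Obj C \<longrightarrow> B \<in> Obj C \<longrightarrow> is_exponential C A B E P p1 p2 ev \<longrightarrow>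
        is_exponential D (Fo A) (Fo B) (Fo E) (Fo P) (Fm P E p1) (Fm P A p2) (Fm P B ev))"

definition id_tm :: "ty \<Rightarrow> tm" where
  "id_tm A = TAbs A (TVar 0)"

text \<open>comp_tm A M N is the term for N o M, i.e. \<lambda>x:A. N (M x).\<close>
definition comp_tm :: "ty \<Rightarrow> tm \<Rightarrow> tm \<Rightarrow> tm" where
  "comp_tm A M N = TAbs A (TApp (lift 0 N) (TApp (lift 0 M) (TVar 0)))"

definition Lam :: "(ty, tm set) cat" where
  "Lam = \<lparr> Obj = UNIV,
           Hom = (\<lambda>A B. {c. \<exists>M. typing [] M (TyArr A B) \<and> c = {N. beq [] M N (TyArr A B)}}),
           Idm = (\<lambda>A. {N. beq [] (id_tm A) N (TyArr A A)}),
           Cmp = (\<lambda>A B C g f. {K. \<exists>N\<in>g. \<exists>M\<in>f. beq [] (comp_tm A M N) K (TyArr A C)}) \<rparr>"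

definition simQ :: "'q set \<Rightarrow> ty \<Rightarrow> tm \<Rightarrow> tm \<Rightarrow> bool" where
  "simQ Q A M N \<longleftrightarrow> typing [] M A \<and> typing [] N A \<and> sem Q M = sem Q N"

definition LamQ :: "'q set \<Rightarrow> (ty, tm set) cat" where
  "LamQ Q = \<lparr> Obj = UNIV,
           Hom = (\<lambda>A B. {c. \<exists>M. typing [] M (TyArr A B) \<and> c = {N. simQ Q (TyArr A B) M N}}),
           Idm = (\<lambda>A. {N. simQ Q (TyArr A A) (id_tm A) N}),
           Cmp = (\<lambda>A B C g f. {K. \<exists>N\<in>g. \<exists>M\<in>f. simQ Q (TyArr A C) (comp_tm A M N) K}) \<rparr>"

definition piQ :: "'q set \<Rightarrow> ty \<Rightarrow> ty \<Rightarrow> tm set \<Rightarrow> tm set" where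
  "piQ Q A B c = {N. \<exists>M\<in>c. simQ Q (TyArr A B) M N}"

definition partial_surj :: "('a \<times> 'b) set \<Rightarrow> 'a set \<Rightarrow> 'b set \<Rightarrow> bool" where
  "partial_surj f Q Q' \<longleftrightarrow> f \<subseteq> Q \<times> Q' \<and> single_valued f \<and> Range f = Q'"

end

theory Submission
  imports Defs
begin

lemma t_var': "i < length \<Gamma> \<Longrightarrow> \<Gamma> ! i = T \<Longrightarrow> typing \<Gamma> (TVar i) T"
  using typing.t_var by blast

lemma t_var0[simp, intro]: "typing (A # \<Gamma>) (TVar 0) A"
  by (rule t_var') auto

lemma t_var1[simp, intro]: "typing (A # B # \<Gamma>) (TVar 1) B"
  by (rule t_var') auto

lemma typing_append: "typing \<Gamma> M A \<Longrightarrow> typing (\<Gamma> @ \<Delta>) M A"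
proof (induction rule: typing.induct)
  case (t_var i \<Gamma>)
  then show ?case using typing.t_var[of i "\<Gamma> @ \<Delta>"] by (simp add: nth_append)
qed (auto intro: typing.intros)

lemma typing_lift:
  "typing \<Gamma> M A \<Longrightarrow> length \<Gamma>1 = k \<Longrightarrow> \<Gamma> = \<Gamma>1 @ \<Gamma>2 \<Longrightarrow> typing (\<Gamma>1 @ B # \<Gamma>2) (lift k M) A"
proof (induction arbitrary: k \<Gamma>1 rule: typing.induct)
  case (t_var i \<Gamma>)
  show ?case
  proof (cases "i < k")
    case True
    then show ?thesis using t_var typing.t_var[of i "\<Gamma>1 @ B # \<Gamma>2"] by (simp add: nth_append)
  next
    case False
    then show ?thesis using t_var typing.t_var[of "Suc i" "\<Gamma>1 @ B # \<Gamma>2"]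
      by (simp add: nth_append Suc_diff_le)
  qed
next
  case (t_abs A \<Gamma> M C)
  have "typing ((A # \<Gamma>1) @ B # \<Gamma>2) (lift (Suc k) M) C"
    by (rule t_abs.IH) (use t_abs.prems in auto)
  then show ?case by (auto intro: typing.intros)
qed (fastforce intro: typing.intros)+

lemma typing_lift0: "typing \<Gamma> M A \<Longrightarrow> typing (B # \<Gamma>) (lift 0 M) A"
  using typing_lift[of \<Gamma> M A "[]" 0 \<Gamma> B] by simp

lemma typing_subst:
  "typing \<Gamma>' M T \<Longrightarrow> \<Gamma>' = \<Gamma>1 @ A # \<Gamma>2 \<Longrightarrow> length \<Gamma>1 = k \<Longrightarrow> typing (\<Gamma>1 @ \<Gamma>2) N A
   \<Longrightarrow> typing (\<Gamma>1 @ \<Gamma>2) (subst M k N) T"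
proof (induction arbitrary: k \<Gamma>1 N rule: typing.induct)
  case (t_var i \<Gamma>)
  consider "i < k" | "i = k" | "i > k" by linarith
  then show ?case
  proof cases
    case 1
    then show ?thesis using t_var typing.t_var[of i "\<Gamma>1 @ \<Gamma>2"] by (simp add: nth_append)
  next
    case 2
    then show ?thesis using t_var by (simp add: nth_append)
  next
    case 3
    then obtain j where j: "i = Suc j" "j \<ge> k" by (cases i) auto
    then show ?thesis using t_var typing.t_var[of j "\<Gamma>1 @ \<Gamma>2"]
      by (simp add: nth_append Suc_diff_le)
  qed
next
  case (t_abs C \<Gamma> M B)
  have "typing (C # \<Gamma>1 @ \<Gamma>2) (lift 0 N) A" using t_abs typing_lift0 by blast
  have "typing ((C # \<Gamma>1) @ \<Gamma>2) (subst M (Suc k) (lift 0 N)) B"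
    by (rule t_abs.IH) (use t_abs.prems \<open>typing (C # \<Gamma>1 @ \<Gamma>2) (lift 0 N) A\<close> in auto)
  then show ?case by (auto intro: typing.intros)
qed (fastforce intro: typing.intros)+

lemma typing_subst0: "typing (A # \<Gamma>) M T \<Longrightarrow> typing \<Gamma> N A \<Longrightarrow> typing \<Gamma> (subst M 0 N) T"
  using typing_subst[of "A # \<Gamma>" M T "[]" A \<Gamma> 0 N] by simp

lemma lift_closed: "typing \<Gamma> M T \<Longrightarrow> length \<Gamma> \<le> k \<Longrightarrow> lift k M = M"
  by (induction arbitrary: k rule: typing.induct) auto

lemma subst_closed: "typing \<Gamma> M T \<Longrightarrow> length \<Gamma> \<le> k \<Longrightarrow> subst M k N = M"
  by (induction arbitrary: k N rule: typing.induct) auto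

lemma beq_typing: "beq \<Gamma> M N A \<Longrightarrow> typing \<Gamma> M A \<and> typing \<Gamma> N A"
proof (induction rule: beq.induct)
  case (beq_beta A \<Gamma> M B N)
  then show ?case using typing_subst0 by (auto intro: typing.intros)
next
  case (beq_eta \<Gamma> M A B)
  have "typing (A # \<Gamma>) (TApp (lift 0 M) (TVar 0)) B"
    using beq_eta typing_lift0 by (auto intro!: typing.intros)
  then show ?case using beq_eta by (auto intro: typing.intros)
qed (auto intro: typing.intros)

lemma beq_append: "beq \<Gamma> M N A \<Longrightarrow> beq (\<Gamma> @ \<Delta>) M N A"
proof (induction rule: beq.induct)
  case (beq_abs A \<Gamma> M M' B)
  then show ?case using beq.beq_abs[of A "\<Gamma> @ \<Delta>"] by simp
next
  case (beq_beta A \<Gamma> M B N)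
  then show ?case using beq.beq_beta[of A "\<Gamma> @ \<Delta>"] typing_append by fastforce
qed (auto intro: beq.intros typing_append)

definition cl :: "tm \<Rightarrow> bool" where "cl M \<longleftrightarrow> (\<exists>T. typing [] M T)"

lemma cl_lift[simp]: "cl M \<Longrightarrow> lift k M = M"
  unfolding cl_def using lift_closed by fastforce
lemma cl_subst[simp]: "cl M \<Longrightarrow> subst M k N = M"
  unfolding cl_def using subst_closed by fastforce
lemma clI: "typing [] M T \<Longrightarrow> cl M" unfolding cl_def by blast

lemma typing_closed: "typing [] M T \<Longrightarrow> typing \<Gamma> M T"
  using typing_append[of "[]" M T \<Gamma>] by simp
lemma beq_closed: "beq [] M N T \<Longrightarrow> beq \<Gamma> M N T"
  using beq_append[of "[]" M N T \<Gamma>] by simp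


lemma finite_sdom: "finite Q \<Longrightarrow> finite (sdom Q T)"
proof (induction T)
  case (TyProd A B)
  have "sdom Q (TyProd A B) = (\<lambda>(a,b). VP a b) ` (sdom Q A \<times> sdom Q B)" by auto
  then show ?case using TyProd by simp
next
  case (TyArr A B)
  have "sdom Q (TyArr A B) \<subseteq> VF ` Abs_fset ` Pow (sdom Q A \<times> sdom Q B)"
  proof
    fix v assume "v \<in> sdom Q (TyArr A B)"
    then obtain g h where v: "v = VF g" "\<forall>a\<in>sdom Q A. h a \<in> sdom Q B"
       "fset g = (\<lambda>a. (a, h a)) ` sdom Q A" by auto
    have "g = Abs_fset (fset g)" by (rule fset_inverse[symmetric])
    moreover have "fset g \<in> Pow (sdom Q A \<times> sdom Q B)" using v by auto
    ultimately show "v \<in> VF ` Abs_fset ` Pow (sdom Q A \<times> sdom Q B)" using v by blast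
  qed
  moreover have "finite (Pow (sdom Q A \<times> sdom Q B))" using TyArr by simp
  ultimately show ?case by (meson finite_imageI finite_subset)
qed auto

lemma vapp_graph: "fset g = (\<lambda>a. (a, h a)) ` S \<Longrightarrow> a \<in> S \<Longrightarrow> vapp (VF g) a = h a"
  unfolding vapp_def by (auto intro!: the_equality)

lemma fset_graph: "finite S \<Longrightarrow> fset (Abs_fset ((\<lambda>a. (a, h a)) ` S)) = (\<lambda>a. (a, h a)) ` S"
  by (simp add: Abs_fset_inverse)

lemma vapp_VF_graph: "finite Q \<Longrightarrow> a \<in> sdom Q A \<Longrightarrow>
  vapp (VF (Abs_fset ((\<lambda>v. (v, F v)) ` sdom Q A))) a = F a"
  using vapp_graph[OF fset_graph[OF finite_sdom]] by blast

lemma vapp_abs: "finite Q \<Longrightarrow> a \<in> sdom Q A \<Longrightarrow> vapp (eval (TAbs A M) Q \<rho>) a = eval M Q (a # \<rho>)"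
  using vapp_graph[OF fset_graph[OF finite_sdom]] by simp

lemma abs_in_sdom: "finite Q \<Longrightarrow> (\<And>a. a \<in> sdom Q A \<Longrightarrow> eval M Q (a # \<rho>) \<in> sdom Q B)
   \<Longrightarrow> eval (TAbs A M) Q \<rho> \<in> sdom Q (TyArr A B)"
proof -
  assume fin: "finite Q" and h: "\<And>a. a \<in> sdom Q A \<Longrightarrow> eval M Q (a # \<rho>) \<in> sdom Q B"
  have "fset (Abs_fset ((\<lambda>a. (a, eval M Q (a # \<rho>))) ` sdom Q A)) = (\<lambda>a. (a, eval M Q (a # \<rho>))) ` sdom Q A"
    by (rule fset_graph[OF finite_sdom[OF fin]])
  then show ?thesis using h
    unfolding eval.simps sdom.simps mem_Collect_eq
    apply (intro exI[of _ "Abs_fset ((\<lambda>a. (a, eval M Q (a # \<rho>))) ` sdom Q A)"] conjI refl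
          exI[of _ "\<lambda>a. eval M Q (a # \<rho>)"])
    by simp_all
qed

lemma vapp_in: "f \<in> sdom Q (TyArr A B) \<Longrightarrow> a \<in> sdom Q A \<Longrightarrow> vapp f a \<in> sdom Q B"
proof -
  assume f: "f \<in> sdom Q (TyArr A B)" and a: "a \<in> sdom Q A"
  obtain F hf where F: "f = VF F" "fset F = (\<lambda>a. (a, hf a)) ` sdom Q A" "\<forall>a\<in>sdom Q A. hf a \<in> sdom Q B"
    using f by auto
  show ?thesis using vapp_graph[OF F(2) a] F a by simp
qed

lemma arr_ext: "f \<in> sdom Q (TyArr A B) \<Longrightarrow> g \<in> sdom Q (TyArr A B) \<Longrightarrow>
   (\<And>a. a \<in> sdom Q A \<Longrightarrow> vapp f a = vapp g a) \<Longrightarrow> f = g"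
proof -
  assume f: "f \<in> sdom Q (TyArr A B)" and g: "g \<in> sdom Q (TyArr A B)"
    and eq: "\<And>a. a \<in> sdom Q A \<Longrightarrow> vapp f a = vapp g a"
  obtain F hf where F: "f = VF F" "fset F = (\<lambda>a. (a, hf a)) ` sdom Q A" using f by auto
  obtain G hg where G: "g = VF G" "fset G = (\<lambda>a. (a, hg a)) ` sdom Q A" using g by auto
  have "\<And>a. a \<in> sdom Q A \<Longrightarrow> hf a = hg a"
    using eq F G vapp_graph by metis
  then have "fset F = fset G" unfolding F(2) G(2) by (intro image_cong) auto
  then have "F = G" by (simp add: fset_inject)
  then show "f = g" using F G by simp
qed

lemma eval_lift: "length \<rho>1 = k \<Longrightarrow> eval (lift k M) Q (\<rho>1 @ v # \<rho>2) = eval M Q (\<rho>1 @ \<rho>2)"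
proof (induction M arbitrary: k \<rho>1)
  case (TVar i)
  then show ?case by (auto simp: nth_append)
next
  case (TAbs A M)
  have "\<And>w. eval (lift (Suc k) M) Q ((w # \<rho>1) @ v # \<rho>2) = eval M Q ((w # \<rho>1) @ \<rho>2)"
    subgoal for w using TAbs.IH[of "w # \<rho>1"] TAbs.prems by simp done
  then show ?case by simp
qed auto

lemma eval_lift0: "eval (lift 0 M) Q (v # \<rho>) = eval M Q \<rho>"
  using eval_lift[of "[]" 0 M Q v \<rho>] by simp

lemma eval_subst: "length \<rho>1 = k \<Longrightarrow>
  eval (subst M k N) Q (\<rho>1 @ \<rho>2) = eval M Q (\<rho>1 @ eval N Q (\<rho>1 @ \<rho>2) # \<rho>2)"
proof (induction M arbitrary: k \<rho>1 N)
  case (TVar i)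
  consider "i < k" | "i = k" | "i > k" by linarith
  then show ?case
  proof cases
    case 3
    then obtain j where "i = Suc j" by (cases i) auto
    then show ?thesis using 3 TVar by (auto simp: nth_append Suc_diff_le)
  qed (use TVar in \<open>auto simp: nth_append\<close>)
next
  case (TAbs A M)
  have "\<And>w. eval (subst M (Suc k) (lift 0 N)) Q ((w # \<rho>1) @ \<rho>2)
     = eval M Q ((w # \<rho>1) @ eval N Q (\<rho>1 @ \<rho>2) # \<rho>2)"
    subgoal for w using TAbs.IH[of "w # \<rho>1" "Suc k" "lift 0 N"] TAbs.prems by (simp add: eval_lift0) done
  then show ?case by simp
qed auto

lemma eval_subst0: "eval (subst M 0 N) Q \<rho> = eval M Q (eval N Q \<rho> # \<rho>)"
  using eval_subst[of "[]" 0 M N Q \<rho>] by simp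

lemma eval_ctx: "typing \<Gamma> M T \<Longrightarrow> length \<rho> = length \<Gamma> \<Longrightarrow> eval M Q (\<rho> @ \<sigma>) = eval M Q \<rho>"
proof (induction arbitrary: \<rho> rule: typing.induct)
  case (t_abs A \<Gamma> M B)
  have "\<And>w. eval M Q ((w # \<rho>) @ \<sigma>) = eval M Q (w # \<rho>)"
    subgoal for w using t_abs.IH[of "w # \<rho>"] t_abs.prems by simp done
  then show ?case by simp
qed (auto simp: nth_append)

definition env :: "'q set \<Rightarrow> 'q val list \<Rightarrow> ty list \<Rightarrow> bool" where
  "env Q \<rho> \<Gamma> \<longleftrightarrow> length \<rho> = length \<Gamma> \<and> (\<forall>i<length \<Gamma>. \<rho> ! i \<in> sdom Q (\<Gamma> ! i))"

lemma env_Nil[simp]: "env Q [] []" by (simp add: env_def)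
lemma env_Cons: "env Q \<rho> \<Gamma> \<Longrightarrow> v \<in> sdom Q A \<Longrightarrow> env Q (v # \<rho>) (A # \<Gamma>)"
  unfolding env_def by (auto simp: nth_Cons split: nat.split)

lemma eval_sound: assumes fin: "finite Q" shows "typing \<Gamma> M T \<Longrightarrow> env Q \<rho> \<Gamma> \<Longrightarrow> eval M Q \<rho> \<in> sdom Q T"
proof (induction arbitrary: \<rho> rule: typing.induct)
  case (t_var i \<Gamma>)
  then show ?case by (simp add: env_def)
next
  case (t_abs A \<Gamma> M B)
  then show ?case by (intro abs_in_sdom fin) (simp add: env_Cons)
next
  case (t_app \<Gamma> M A B N)
  then show ?case using vapp_in[of "eval M Q \<rho>" Q A B "eval N Q \<rho>"] by simp
next
  case (t_unit \<Gamma>)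
  then show ?case by simp
next
  case (t_pair \<Gamma> M A N B)
  then show ?case by simp
next
  case (t_fst \<Gamma> M A B)
  from t_fst.IH[OF t_fst.prems] obtain a b where "eval M Q \<rho> = VP a b" "a \<in> sdom Q A" by auto
  then show ?case by (simp add: vfst_def)
next
  case (t_snd \<Gamma> M A B)
  from t_snd.IH[OF t_snd.prems] obtain a b where "eval M Q \<rho> = VP a b" "b \<in> sdom Q B" by auto
  then show ?case by (simp add: vsnd_def)
qed

lemma beq_sound: assumes fin: "finite Q" shows "beq \<Gamma> M N T \<Longrightarrow> env Q \<rho> \<Gamma> \<Longrightarrow> eval M Q \<rho> = eval N Q \<rho>"
proof (induction arbitrary: \<rho> rule: beq.induct)
  case (beq_refl \<Gamma> M A)
  then show ?case by simp
next
  case (beq_sym \<Gamma> M N A)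
  then show ?case by simp
next
  case (beq_trans \<Gamma> M N A K)
  then show ?case by simp
next
  case (beq_abs A \<Gamma> M M' B)
  have "\<And>v. v \<in> sdom Q A \<Longrightarrow> eval M Q (v # \<rho>) = eval M' Q (v # \<rho>)"
    using beq_abs.IH beq_abs.prems env_Cons by blast
  then have "(\<lambda>v. (v, eval M Q (v # \<rho>))) ` sdom Q A = (\<lambda>v. (v, eval M' Q (v # \<rho>))) ` sdom Q A"
    by (intro image_cong) auto
  then show ?case by simp
next
  case (beq_app \<Gamma> M M' A B N N')
  then show ?case by simp
next
  case (beq_pair \<Gamma> M M' A N N' B)
  then show ?case by simp
next
  case (beq_fst \<Gamma> M M' A B)
  then show ?case by simp
next
  case (beq_snd \<Gamma> M M' A B)
  then show ?case by simp
next
  case (beq_beta A \<Gamma> M B N)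
  have "eval N Q \<rho> \<in> sdom Q A" using eval_sound[OF fin beq_beta(2,3)] .
  then show ?case by (simp add: vapp_VF_graph[OF fin] eval_subst0)
next
  case (beq_eta \<Gamma> M A B)
  have 1: "eval M Q \<rho> \<in> sdom Q (TyArr A B)" using beq_eta eval_sound[OF fin] by blast
  have 2: "eval (TAbs A (TApp (lift 0 M) (TVar 0))) Q \<rho> \<in> sdom Q (TyArr A B)"
    using beq_eta beq_typing[OF beq.beq_eta[OF beq_eta(1)]] eval_sound[OF fin] by blast
  show ?case
    by (rule arr_ext[OF 2 1]) (simp add: vapp_VF_graph[OF fin] eval_lift0)
next
  case (beq_fst_pair \<Gamma> M A N B)
  then show ?case by (simp add: vfst_def)
next
  case (beq_snd_pair \<Gamma> M A N B)
  then show ?case by (simp add: vsnd_def)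
next
  case (beq_surj_pair \<Gamma> M A B)
  from eval_sound[OF fin beq_surj_pair(1,2)] obtain a b where "eval M Q \<rho> = VP a b" by auto
  then show ?case by (simp add: vfst_def vsnd_def)
next
  case (beq_unit_eta \<Gamma> M)
  then show ?case using eval_sound[OF fin beq_unit_eta(1,2)] by simp
qed


lemma cat_id: "is_category C \<Longrightarrow> A \<in> Obj C \<Longrightarrow> Idm C A \<in> Hom C A A"
  unfolding is_category_def by blast
lemma cat_comp: "is_category C \<Longrightarrow> A \<in> Obj C \<Longrightarrow> B \<in> Obj C \<Longrightarrow> D \<in> Obj C \<Longrightarrow>
  f \<in> Hom C A B \<Longrightarrow> g \<in> Hom C B D \<Longrightarrow> Cmp C A B D g f \<in> Hom C A D"
  unfolding is_category_def by blast
lemma cat_idl: "is_category C \<Longrightarrow> A \<in> Obj C \<Longrightarrow> B \<in> Obj C \<Longrightarrow>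
  f \<in> Hom C A B \<Longrightarrow> Cmp C A B B (Idm C B) f = f"
  unfolding is_category_def by blast
lemma cat_idr: "is_category C \<Longrightarrow> A \<in> Obj C \<Longrightarrow> B \<in> Obj C \<Longrightarrow>
  f \<in> Hom C A B \<Longrightarrow> Cmp C A A B f (Idm C A) = f"
  unfolding is_category_def by blast
lemma cat_assoc: "is_category C \<Longrightarrow> A \<in> Obj C \<Longrightarrow> B \<in> Obj C \<Longrightarrow> D \<in> Obj C \<Longrightarrow> E \<in> Obj C \<Longrightarrow>
  f \<in> Hom C A B \<Longrightarrow> g \<in> Hom C B D \<Longrightarrow> h \<in> Hom C D E \<Longrightarrow>
  Cmp C A D E h (Cmp C A B D g f) = Cmp C A B E (Cmp C B D E h g) f"
  unfolding is_category_def by blast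

lemma fun_hom: "is_functor C D id F \<Longrightarrow> A \<in> Obj C \<Longrightarrow> B \<in> Obj C \<Longrightarrow> f \<in> Hom C A B \<Longrightarrow>
  F A B f \<in> Hom D A B"
  unfolding is_functor_def by auto
lemma fun_id: "is_functor C D id F \<Longrightarrow> A \<in> Obj C \<Longrightarrow> F A A (Idm C A) = Idm D A"
  unfolding is_functor_def by auto
lemma fun_comp: "is_functor C D id F \<Longrightarrow> A \<in> Obj C \<Longrightarrow> B \<in> Obj C \<Longrightarrow> E \<in> Obj C \<Longrightarrow>
  f \<in> Hom C A B \<Longrightarrow> g \<in> Hom C B E \<Longrightarrow>
  F A E (Cmp C A B E g f) = Cmp D A B E (F B E g) (F A B f)"
  unfolding is_functor_def by auto

lemma prod_pres:
  assumes C: "is_category C" and D: "is_category D" and FF: "is_functor C D id F"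
    and OC: "Obj C = UNIV" and OD: "Obj D = UNIV"
    and prodP: "is_product C A B P p1 p2"
    and q1: "q1 \<in> Hom C P0 A" and q2: "q2 \<in> Hom C P0 B" and pr: "pr \<in> Hom C P P0"
    and pr1: "Cmp C P P0 A q1 pr = p1" and pr2: "Cmp C P P0 B q2 pr = p2"
    and prodD: "is_product D A B P0 (F P0 A q1) (F P0 B q2)"
  shows "is_product D A B P (F P A p1) (F P B p2)"
proof -
  note [simp] = OC OD
  have p1: "p1 \<in> Hom C P A" and p2: "p2 \<in> Hom C P B" using prodP unfolding is_product_def by auto
  have uP: "\<And>X f g. f \<in> Hom C X A \<Longrightarrow> g \<in> Hom C X B \<Longrightarrow>
      \<exists>!h. h \<in> Hom C X P \<and> Cmp C X P A p1 h = f \<and> Cmp C X P B p2 h = g"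
    using prodP unfolding is_product_def by auto
  obtain v where v: "v \<in> Hom C P0 P" "Cmp C P0 P A p1 v = q1" "Cmp C P0 P B p2 v = q2"
    using uP[OF q1 q2] by blast
  have vpr: "Cmp C P P0 P v pr \<in> Hom C P P" using cat_comp[OF C] v pr by simp
  have "Cmp C P P A p1 (Cmp C P P0 P v pr) = p1"
    using cat_assoc[OF C _ _ _ _ pr v(1) p1] v pr1 by simp
  moreover have "Cmp C P P B p2 (Cmp C P P0 P v pr) = p2"
    using cat_assoc[OF C _ _ _ _ pr v(1) p2] v pr2 by simp
  moreover have "Cmp C P P A p1 (Idm C P) = p1" "Cmp C P P B p2 (Idm C P) = p2"
    using cat_idr[OF C] p1 p2 by auto
  ultimately have vpr_id: "Cmp C P P0 P v pr = Idm C P"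
    using uP[OF p1 p2] vpr cat_id[OF C] by (metis OC UNIV_I)
  have Fq1: "F P0 A q1 \<in> Hom D P0 A" and Fq2: "F P0 B q2 \<in> Hom D P0 B"
    using prodD unfolding is_product_def by auto
  have uD: "\<And>X f g. f \<in> Hom D X A \<Longrightarrow> g \<in> Hom D X B \<Longrightarrow>
      \<exists>!h. h \<in> Hom D X P0 \<and> Cmp D X P0 A (F P0 A q1) h = f \<and> Cmp D X P0 B (F P0 B q2) h = g"
    using prodD unfolding is_product_def by auto
  have Fp1: "F P A p1 \<in> Hom D P A" and Fp2: "F P B p2 \<in> Hom D P B" using fun_hom[OF FF] p1 p2 by auto
  have Fv: "F P0 P v \<in> Hom D P0 P" and Fpr: "F P P0 pr \<in> Hom D P P0" using fun_hom[OF FF] v pr by auto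
  have Fp1v: "Cmp D P0 P A (F P A p1) (F P0 P v) = F P0 A q1"
    using fun_comp[OF FF _ _ _ v(1) p1] v by simp
  have Fp2v: "Cmp D P0 P B (F P B p2) (F P0 P v) = F P0 B q2"
    using fun_comp[OF FF _ _ _ v(1) p2] v by simp
  have Fq1pr: "Cmp D P P0 A (F P0 A q1) (F P P0 pr) = F P A p1"
    using fun_comp[OF FF _ _ _ pr q1] pr1 by simp
  have Fq2pr: "Cmp D P P0 B (F P0 B q2) (F P P0 pr) = F P B p2"
    using fun_comp[OF FF _ _ _ pr q2] pr2 by simp
  have Fvpr: "Cmp D P P0 P (F P0 P v) (F P P0 pr) = Idm D P"
    using fun_comp[OF FF _ _ _ pr v(1)] vpr_id fun_id[OF FF] by simp
  show ?thesis unfolding is_product_def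
  proof (intro conjI ballI)
    show "P \<in> Obj D" by simp
    show "F P A p1 \<in> Hom D P A" "F P B p2 \<in> Hom D P B" by (fact Fp1, fact Fp2)
    fix X f g assume X: "X \<in> Obj D" and f: "f \<in> Hom D X A" and g: "g \<in> Hom D X B"
    obtain m where m: "m \<in> Hom D X P0" "Cmp D X P0 A (F P0 A q1) m = f" "Cmp D X P0 B (F P0 B q2) m = g"
      using uD[OF f g] by blast
    let ?h = "Cmp D X P0 P (F P0 P v) m"
    have h: "?h \<in> Hom D X P" using cat_comp[OF D] Fv m by simp
    have h1: "Cmp D X P A (F P A p1) ?h = f"
      using cat_assoc[OF D _ _ _ _ m(1) Fv Fp1] Fp1v m by simp
    have h2: "Cmp D X P B (F P B p2) ?h = g"
      using cat_assoc[OF D _ _ _ _ m(1) Fv Fp2] Fp2v m by simp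
    show "\<exists>!h. h \<in> Hom D X P \<and> Cmp D X P A (F P A p1) h = f \<and> Cmp D X P B (F P B p2) h = g"
    proof (rule ex1I[of _ ?h])
      show "?h \<in> Hom D X P \<and> Cmp D X P A (F P A p1) ?h = f \<and> Cmp D X P B (F P B p2) ?h = g"
        using h h1 h2 by blast
      fix h' assume h': "h' \<in> Hom D X P \<and> Cmp D X P A (F P A p1) h' = f \<and> Cmp D X P B (F P B p2) h' = g"
      let ?k = "Cmp D X P P0 (F P P0 pr) h'"
      have k: "?k \<in> Hom D X P0" using cat_comp[OF D] Fpr h' by simp
      have "Cmp D X P0 A (F P0 A q1) ?k = f"
        using cat_assoc[OF D _ _ _ _ _ Fpr Fq1, of X h'] h' Fq1pr by simp
      moreover have "Cmp D X P0 B (F P0 B q2) ?k = g"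
        using cat_assoc[OF D _ _ _ _ _ Fpr Fq2, of X h'] h' Fq2pr by simp
      ultimately have km: "?k = m" using uD[OF f g] k m by blast
      have "h' = Cmp D X P P (Idm D P) h'" using cat_idl[OF D] h' by simp
      also have "\<dots> = Cmp D X P0 P (F P0 P v) ?k"
        using cat_assoc[OF D _ _ _ _ _ Fpr Fv, of X h'] h' Fvpr by simp
      also have "\<dots> = ?h" using km by simp
      finally show "h' = ?h" .
    qed
  qed
qed


lemma exp_pres:
  assumes C: "is_category C" and D: "is_category D" and FF: "is_functor C D id F"
    and OC: "Obj C = UNIV" and OD: "Obj D = UNIV"
    and pres: "\<And>A B P p1 p2. is_product C A B P p1 p2 \<Longrightarrow> is_product D A B P (F P A p1) (F P B p2)"
    and expE: "is_exponential C A B E P p1 p2 ev"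
    and prod0: "is_product C E0 A P0 q1 q2" and ev0: "ev0 \<in> Hom C P0 B"
    and expD: "is_exponential D A B E0 P0 (F P0 E0 q1) (F P0 A q2) (F P0 B ev0)"
    and v: "v \<in> Hom C E E0" and kv: "kv \<in> Hom C P P0"
    and kv1: "Cmp C P P0 E0 q1 kv = Cmp C P E E0 v p1"
    and kv2: "Cmp C P P0 A q2 kv = p2" and kv3: "Cmp C P P0 B ev0 kv = ev"
  shows "is_exponential D A B E P (F P E p1) (F P A p2) (F P B ev)"
proof -
  note [simp] = OC OD
  have prodE: "is_product C E A P p1 p2" and ev: "ev \<in> Hom C P B" using expE
    unfolding is_exponential_def by auto
  have p1: "p1 \<in> Hom C P E" and p2: "p2 \<in> Hom C P A" using prodE unfolding is_product_def by auto
  have q1: "q1 \<in> Hom C P0 E0" and q2: "q2 \<in> Hom C P0 A" using prod0 unfolding is_product_def by auto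
  have PE: "\<And>X R r1 r2 f. is_product C X A R r1 r2 \<Longrightarrow> f \<in> Hom C R B \<Longrightarrow>
     \<exists>!h. h \<in> Hom C X E \<and> (\<exists>k\<in>Hom C R P. Cmp C R P E p1 k = Cmp C R X E h r1 \<and>
                            Cmp C R P A p2 k = r2 \<and> Cmp C R P B ev k = f)"
    using expE unfolding is_exponential_def by auto
  obtain u ku where u: "u \<in> Hom C E0 E" and ku: "ku \<in> Hom C P0 P"
    and ku1: "Cmp C P0 P E p1 ku = Cmp C P0 E0 E u q1" and ku2: "Cmp C P0 P A p2 ku = q2"
    and ku3: "Cmp C P0 P B ev ku = ev0"
    using PE[OF prod0 ev0] by blast
  have uv: "Cmp C E E0 E u v \<in> Hom C E E" using cat_comp[OF C] u v by simp
  have kk: "Cmp C P P0 P ku kv \<in> Hom C P P" using cat_comp[OF C] ku kv by simp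
  have "Cmp C P P E p1 (Cmp C P P0 P ku kv) = Cmp C P P0 E (Cmp C P0 P E p1 ku) kv"
    using cat_assoc[OF C _ _ _ _ kv ku p1] by simp
  also have "\<dots> = Cmp C P P0 E (Cmp C P0 E0 E u q1) kv" using ku1 by simp
  also have "\<dots> = Cmp C P E0 E u (Cmp C P P0 E0 q1 kv)"
    using cat_assoc[OF C _ _ _ _ kv q1 u] by simp
  also have "\<dots> = Cmp C P E0 E u (Cmp C P E E0 v p1)" using kv1 by simp
  also have "\<dots> = Cmp C P E E (Cmp C E E0 E u v) p1"
    using cat_assoc[OF C _ _ _ _ p1 v u] by simp
  finally have a1: "Cmp C P P E p1 (Cmp C P P0 P ku kv) = Cmp C P E E (Cmp C E E0 E u v) p1" .
  have a2: "Cmp C P P A p2 (Cmp C P P0 P ku kv) = p2"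
    using cat_assoc[OF C _ _ _ _ kv ku p2] ku2 kv2 by simp
  have a3: "Cmp C P P B ev (Cmp C P P0 P ku kv) = ev"
    using cat_assoc[OF C _ _ _ _ kv ku ev] ku3 kv3 by simp
  have b1: "Cmp C P P E p1 (Idm C P) = Cmp C P E E (Idm C E) p1"
    using cat_idl[OF C] cat_idr[OF C] p1 by simp
  have b2: "Cmp C P P A p2 (Idm C P) = p2" and b3: "Cmp C P P B ev (Idm C P) = ev"
    using cat_idr[OF C] p2 ev by auto
  have uv_id: "Cmp C E E0 E u v = Idm C E"
  proof -
    have "\<exists>!h. h \<in> Hom C E E \<and> (\<exists>k\<in>Hom C P P. Cmp C P P E p1 k = Cmp C P E E h p1 \<and>
                            Cmp C P P A p2 k = p2 \<and> Cmp C P P B ev k = ev)"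
      using PE[OF prodE ev] .
    moreover have "Cmp C E E0 E u v \<in> Hom C E E \<and> (\<exists>k\<in>Hom C P P. Cmp C P P E p1 k = Cmp C P E E (Cmp C E E0 E u v) p1 \<and>
                            Cmp C P P A p2 k = p2 \<and> Cmp C P P B ev k = ev)"
      using uv kk a1 a2 a3 by blast
    moreover have "Idm C E \<in> Hom C E E \<and> (\<exists>k\<in>Hom C P P. Cmp C P P E p1 k = Cmp C P E E (Idm C E) p1 \<and>
                            Cmp C P P A p2 k = p2 \<and> Cmp C P P B ev k = ev)"
      using cat_id[OF C, of E] cat_id[OF C, of P] b1 b2 b3 by auto
    ultimately show ?thesis by blast
  qed
  have Fp1: "F P E p1 \<in> Hom D P E" and Fp2: "F P A p2 \<in> Hom D P A" and Fev: "F P B ev \<in> Hom D P B"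
    using fun_hom[OF FF] p1 p2 ev by auto
  have Fq1: "F P0 E0 q1 \<in> Hom D P0 E0" and Fq2: "F P0 A q2 \<in> Hom D P0 A" and Fev0: "F P0 B ev0 \<in> Hom D P0 B"
    using fun_hom[OF FF] q1 q2 ev0 by auto
  have Fu: "F E0 E u \<in> Hom D E0 E" and Fku: "F P0 P ku \<in> Hom D P0 P"
    and Fv: "F E E0 v \<in> Hom D E E0" and Fkv: "F P P0 kv \<in> Hom D P P0"
    using fun_hom[OF FF] u ku v kv by auto
  have Fku1: "Cmp D P0 P E (F P E p1) (F P0 P ku) = Cmp D P0 E0 E (F E0 E u) (F P0 E0 q1)"
    using fun_comp[OF FF _ _ _ ku p1] fun_comp[OF FF _ _ _ q1 u] ku1 by simp
  have Fku2: "Cmp D P0 P A (F P A p2) (F P0 P ku) = F P0 A q2"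
    using fun_comp[OF FF _ _ _ ku p2] ku2 by simp
  have Fku3: "Cmp D P0 P B (F P B ev) (F P0 P ku) = F P0 B ev0"
    using fun_comp[OF FF _ _ _ ku ev] ku3 by simp
  have Fkv1: "Cmp D P P0 E0 (F P0 E0 q1) (F P P0 kv) = Cmp D P E E0 (F E E0 v) (F P E p1)"
    using fun_comp[OF FF _ _ _ kv q1] fun_comp[OF FF _ _ _ p1 v] kv1 by simp
  have Fkv2: "Cmp D P P0 A (F P0 A q2) (F P P0 kv) = F P A p2"
    using fun_comp[OF FF _ _ _ kv q2] kv2 by simp
  have Fkv3: "Cmp D P P0 B (F P0 B ev0) (F P P0 kv) = F P B ev"
    using fun_comp[OF FF _ _ _ kv ev0] kv3 by simp
  have Fuv: "Cmp D E E0 E (F E0 E u) (F E E0 v) = Idm D E"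
    using fun_comp[OF FF _ _ _ v u] uv_id fun_id[OF FF] by simp
  have PD: "\<And>X R r1 r2 f. is_product D X A R r1 r2 \<Longrightarrow> f \<in> Hom D R B \<Longrightarrow>
     \<exists>!h. h \<in> Hom D X E0 \<and> (\<exists>k\<in>Hom D R P0. Cmp D R P0 E0 (F P0 E0 q1) k = Cmp D R X E0 h r1 \<and>
                            Cmp D R P0 A (F P0 A q2) k = r2 \<and> Cmp D R P0 B (F P0 B ev0) k = f)"
    using expD unfolding is_exponential_def by auto
  show ?thesis unfolding is_exponential_def
  proof (intro conjI allI impI ballI)
    show "E \<in> Obj D" by simp
    show "is_product D E A P (F P E p1) (F P A p2)" using pres[OF prodE] .
    show "F P B ev \<in> Hom D P B" by (fact Fev)
    fix X R r1 r2 f assume X: "X \<in> Obj D" and prodR: "is_product D X A R r1 r2" and f: "f \<in> Hom D R B"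
    have r1: "r1 \<in> Hom D R X" and r2: "r2 \<in> Hom D R A" using prodR unfolding is_product_def by auto
    obtain h0 k0 where h0: "h0 \<in> Hom D X E0" and k0: "k0 \<in> Hom D R P0"
      and k01: "Cmp D R P0 E0 (F P0 E0 q1) k0 = Cmp D R X E0 h0 r1"
      and k02: "Cmp D R P0 A (F P0 A q2) k0 = r2" and k03: "Cmp D R P0 B (F P0 B ev0) k0 = f"
      using PD[OF prodR f] by blast
    have uniq0: "\<And>h k. h \<in> Hom D X E0 \<Longrightarrow> k \<in> Hom D R P0 \<Longrightarrow> Cmp D R P0 E0 (F P0 E0 q1) k = Cmp D R X E0 h r1 \<Longrightarrow>
       Cmp D R P0 A (F P0 A q2) k = r2 \<Longrightarrow> Cmp D R P0 B (F P0 B ev0) k = f \<Longrightarrow> h = h0"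
      using PD[OF prodR f] h0 k0 k01 k02 k03 by blast
    let ?h = "Cmp D X E0 E (F E0 E u) h0"
    let ?k = "Cmp D R P0 P (F P0 P ku) k0"
    have h: "?h \<in> Hom D X E" using cat_comp[OF D] Fu h0 by simp
    have k: "?k \<in> Hom D R P" using cat_comp[OF D] Fku k0 by simp
    have "Cmp D R P E (F P E p1) ?k = Cmp D R P0 E (Cmp D P0 P E (F P E p1) (F P0 P ku)) k0"
      using cat_assoc[OF D _ _ _ _ k0 Fku Fp1] by simp
    also have "\<dots> = Cmp D R P0 E (Cmp D P0 E0 E (F E0 E u) (F P0 E0 q1)) k0" using Fku1 by simp
    also have "\<dots> = Cmp D R E0 E (F E0 E u) (Cmp D R P0 E0 (F P0 E0 q1) k0)"
      using cat_assoc[OF D _ _ _ _ k0 Fq1 Fu] by simp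
    also have "\<dots> = Cmp D R E0 E (F E0 E u) (Cmp D R X E0 h0 r1)" using k01 by simp
    also have "\<dots> = Cmp D R X E ?h r1" using cat_assoc[OF D _ _ _ _ r1 h0 Fu] by simp
    finally have hk1: "Cmp D R P E (F P E p1) ?k = Cmp D R X E ?h r1" .
    have hk2: "Cmp D R P A (F P A p2) ?k = r2"
      using cat_assoc[OF D _ _ _ _ k0 Fku Fp2] Fku2 k02 by simp
    have hk3: "Cmp D R P B (F P B ev) ?k = f"
      using cat_assoc[OF D _ _ _ _ k0 Fku Fev] Fku3 k03 by simp
    show "\<exists>!h. h \<in> Hom D X E \<and> (\<exists>k\<in>Hom D R P. Cmp D R P E (F P E p1) k = Cmp D R X E h r1 \<and>
                Cmp D R P A (F P A p2) k = r2 \<and> Cmp D R P B (F P B ev) k = f)"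
    proof (rule ex1I[of _ ?h])
      show "?h \<in> Hom D X E \<and> (\<exists>k\<in>Hom D R P. Cmp D R P E (F P E p1) k = Cmp D R X E ?h r1 \<and>
                Cmp D R P A (F P A p2) k = r2 \<and> Cmp D R P B (F P B ev) k = f)"
        using h k hk1 hk2 hk3 by blast
      fix h' assume "h' \<in> Hom D X E \<and> (\<exists>k\<in>Hom D R P. Cmp D R P E (F P E p1) k = Cmp D R X E h' r1 \<and>
                Cmp D R P A (F P A p2) k = r2 \<and> Cmp D R P B (F P B ev) k = f)"
      then obtain k' where h': "h' \<in> Hom D X E" and k': "k' \<in> Hom D R P"
        and k'1: "Cmp D R P E (F P E p1) k' = Cmp D R X E h' r1"
        and k'2: "Cmp D R P A (F P A p2) k' = r2" and k'3: "Cmp D R P B (F P B ev) k' = f" by blast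
      let ?vh = "Cmp D X E E0 (F E E0 v) h'"
      let ?vk = "Cmp D R P P0 (F P P0 kv) k'"
      have vh: "?vh \<in> Hom D X E0" using cat_comp[OF D] Fv h' by simp
      have vk: "?vk \<in> Hom D R P0" using cat_comp[OF D] Fkv k' by simp
      have "Cmp D R P0 E0 (F P0 E0 q1) ?vk = Cmp D R P E0 (Cmp D P P0 E0 (F P0 E0 q1) (F P P0 kv)) k'"
        using cat_assoc[OF D _ _ _ _ k' Fkv Fq1] by simp
      also have "\<dots> = Cmp D R P E0 (Cmp D P E E0 (F E E0 v) (F P E p1)) k'" using Fkv1 by simp
      also have "\<dots> = Cmp D R E E0 (F E E0 v) (Cmp D R P E (F P E p1) k')"
        using cat_assoc[OF D _ _ _ _ k' Fp1 Fv] by simp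
      also have "\<dots> = Cmp D R E E0 (F E E0 v) (Cmp D R X E h' r1)" using k'1 by simp
      also have "\<dots> = Cmp D R X E0 ?vh r1" using cat_assoc[OF D _ _ _ _ r1 h' Fv] by simp
      finally have v1: "Cmp D R P0 E0 (F P0 E0 q1) ?vk = Cmp D R X E0 ?vh r1" .
      have v2: "Cmp D R P0 A (F P0 A q2) ?vk = r2"
        using cat_assoc[OF D _ _ _ _ k' Fkv Fq2] Fkv2 k'2 by simp
      have v3: "Cmp D R P0 B (F P0 B ev0) ?vk = f"
        using cat_assoc[OF D _ _ _ _ k' Fkv Fev0] Fkv3 k'3 by simp
      have vh0: "?vh = h0" using uniq0[OF vh vk v1 v2 v3] .
      have "h' = Cmp D X E E (Idm D E) h'" using cat_idl[OF D] h' by simp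
      also have "\<dots> = Cmp D X E0 E (F E0 E u) ?vh"
        using cat_assoc[OF D _ _ _ _ h' Fv Fu] Fuv by simp
      also have "\<dots> = ?h" using vh0 by simp
      finally show "h' = ?h" .
    qed
  qed
qed


definition fstT :: "ty \<Rightarrow> ty \<Rightarrow> tm" where "fstT A B = TAbs (TyProd A B) (TFst (TVar 0))"
definition sndT :: "ty \<Rightarrow> ty \<Rightarrow> tm" where "sndT A B = TAbs (TyProd A B) (TSnd (TVar 0))"
definition pairT :: "ty \<Rightarrow> tm \<Rightarrow> tm \<Rightarrow> tm" where
  "pairT X F G = TAbs X (TPair (TApp F (TVar 0)) (TApp G (TVar 0)))"
definition unitT :: "ty \<Rightarrow> tm" where "unitT X = TAbs X TUnit"
definition evT :: "ty \<Rightarrow> ty \<Rightarrow> tm" where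
  "evT A B = TAbs (TyProd (TyArr A B) A) (TApp (TFst (TVar 0)) (TSnd (TVar 0)))"
definition curT :: "ty \<Rightarrow> ty \<Rightarrow> tm \<Rightarrow> tm \<Rightarrow> tm" where
  "curT X A F U = TAbs X (TAbs A (TApp F (TApp U (TPair (TVar 1) (TVar 0)))))"

lemma typing_fstT[simp, intro]: "typing [] (fstT A B) (TyArr (TyProd A B) A)"
  unfolding fstT_def by (rule typing.t_abs, rule typing.t_fst[of _ _ _ B], rule t_var0)
lemma typing_sndT[simp, intro]: "typing [] (sndT A B) (TyArr (TyProd A B) B)"
  unfolding sndT_def by (rule typing.t_abs, rule typing.t_snd[of _ _ A], rule t_var0)
lemma typing_unitT[simp, intro]: "typing [] (unitT X) (TyArr X TyOne)"
  unfolding unitT_def by (rule typing.t_abs, rule typing.t_unit)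
lemma typing_evT[simp, intro]: "typing [] (evT A B) (TyArr (TyProd (TyArr A B) A) B)"
  unfolding evT_def
  by (rule typing.t_abs, rule typing.t_app[of _ _ A B], rule typing.t_fst[of _ _ _ A], rule t_var0,
      rule typing.t_snd[of _ _ "TyArr A B"], rule t_var0)
lemma typing_pairT[intro]: "typing [] F (TyArr X A) \<Longrightarrow> typing [] G (TyArr X B) \<Longrightarrow>
  typing [] (pairT X F G) (TyArr X (TyProd A B))"
  unfolding pairT_def
  by (rule typing.t_abs, rule typing.t_pair, rule typing.t_app[of _ F X A], erule typing_closed, rule t_var0,
      rule typing.t_app[of _ G X B], erule typing_closed, rule t_var0)
lemma typing_curT[intro]: "typing [] F (TyArr R B) \<Longrightarrow> typing [] U (TyArr (TyProd X A) R) \<Longrightarrow>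
  typing [] (curT X A F U) (TyArr X (TyArr A B))"
  unfolding curT_def
  by (rule typing.t_abs, rule typing.t_abs, rule typing.t_app[of _ F R B], erule typing_closed,
      rule typing.t_app[of _ U "TyProd X A" R], erule typing_closed, rule typing.t_pair, rule t_var1, rule t_var0)

lemma cl_fstT[simp]: "cl (fstT A B)" and cl_sndT[simp]: "cl (sndT A B)" and cl_evT[simp]: "cl (evT A B)"
  and cl_unitT[simp]: "cl (unitT X)"
  by (auto intro: clI)

lemma typing_id[simp, intro]: "typing [] (id_tm A) (TyArr A A)"
  unfolding id_tm_def by (auto intro: typing.intros)

lemma comp_tm_cl: "typing [] M T \<Longrightarrow> typing [] N T' \<Longrightarrow> comp_tm A M N = TAbs A (TApp N (TApp M (TVar 0)))"
  unfolding comp_tm_def using clI by simp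

lemma typing_comp[intro]: "typing [] M (TyArr A B) \<Longrightarrow> typing [] N (TyArr B C) \<Longrightarrow>
  typing [] (comp_tm A M N) (TyArr A C)"
  by (simp add: comp_tm_cl) (meson typing.intros typing_closed t_var0)

lemma cl_id[simp]: "cl (id_tm A)" using clI typing_id by blast
lemma cl_comp: "typing [] M (TyArr A B) \<Longrightarrow> typing [] N (TyArr B C) \<Longrightarrow> cl (comp_tm A M N)"
  using clI typing_comp by blast


definition clsQ :: "'q set \<Rightarrow> ty \<Rightarrow> tm \<Rightarrow> tm set" where
  "clsQ Q T M = {N. simQ Q T M N}"

lemma LamQ_Obj[simp]: "Obj (LamQ Q) = UNIV" by (simp add: LamQ_def)
lemma LamQ_Hom: "Hom (LamQ Q) A B = {c. \<exists>M. typing [] M (TyArr A B) \<and> c = clsQ Q (TyArr A B) M}"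
  by (simp add: LamQ_def clsQ_def)
lemma LamQ_Idm: "Idm (LamQ Q) A = clsQ Q (TyArr A A) (id_tm A)"
  by (simp add: LamQ_def clsQ_def)
lemma LamQ_Cmp: "Cmp (LamQ Q) A B C g f = {K. \<exists>N\<in>g. \<exists>M\<in>f. simQ Q (TyArr A C) (comp_tm A M N) K}"
  by (simp add: LamQ_def)

lemma HomQ_I: "typing [] M (TyArr A B) \<Longrightarrow> clsQ Q (TyArr A B) M \<in> Hom (LamQ Q) A B"
  by (auto simp: LamQ_Hom)
lemma HomQ_E: "f \<in> Hom (LamQ Q) A B \<Longrightarrow> (\<And>M. typing [] M (TyArr A B) \<Longrightarrow> f = clsQ Q (TyArr A B) M \<Longrightarrow> P) \<Longrightarrow> P"
  by (auto simp: LamQ_Hom)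

lemma sem_cl: "typing [] M T \<Longrightarrow> eval M Q \<rho> = sem Q M"
  using eval_ctx[of "[]" M T "[]" Q \<rho>] by (simp add: sem_def)
lemma eval_cl[simp]: "cl M \<Longrightarrow> eval M Q \<rho> = sem Q M"
  using sem_cl cl_def by blast
lemma sem_in: "finite Q \<Longrightarrow> typing [] M T \<Longrightarrow> sem Q M \<in> sdom Q T"
  unfolding sem_def using eval_sound by fastforce
lemma sem_abs: "finite Q \<Longrightarrow> a \<in> sdom Q A \<Longrightarrow> vapp (sem Q (TAbs A M)) a = eval M Q [a]"
  unfolding sem_def using vapp_abs by blast
lemma vfst_VP[simp]: "vfst (VP a b) = a" by (simp add: vfst_def)
lemma vsnd_VP[simp]: "vsnd (VP a b) = b" by (simp add: vsnd_def)

lemma mem_clsQ: "N \<in> clsQ Q T M \<longleftrightarrow> typing [] M T \<and> typing [] N T \<and> sem Q M = sem Q N"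
  by (simp add: clsQ_def simQ_def)

lemma clsQ_eq_iff: "typing [] M T \<Longrightarrow> typing [] M' T \<Longrightarrow> clsQ Q T M = clsQ Q T M' \<longleftrightarrow> sem Q M = sem Q M'"
  unfolding clsQ_def simQ_def by auto

lemma semQ_ext: "finite Q \<Longrightarrow> typing [] M (TyArr A B) \<Longrightarrow> typing [] M' (TyArr A B) \<Longrightarrow>
  (\<And>a. a \<in> sdom Q A \<Longrightarrow> vapp (sem Q M) a = vapp (sem Q M') a) \<Longrightarrow> sem Q M = sem Q M'"
  using arr_ext sem_in by metis

lemma clsQ_eqI: "finite Q \<Longrightarrow> typing [] M (TyArr A B) \<Longrightarrow> typing [] M' (TyArr A B) \<Longrightarrow>
  (\<And>a. a \<in> sdom Q A \<Longrightarrow> vapp (sem Q M) a = vapp (sem Q M') a) \<Longrightarrow> clsQ Q (TyArr A B) M = clsQ Q (TyArr A B) M'"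
  using semQ_ext clsQ_eq_iff by metis

lemma clsQ_apD: "clsQ Q (TyArr A B) M = clsQ Q (TyArr A B) M' \<Longrightarrow> typing [] M (TyArr A B) \<Longrightarrow> typing [] M' (TyArr A B) \<Longrightarrow>
  vapp (sem Q M) a = vapp (sem Q M') a"
  using clsQ_eq_iff by metis

lemma ap_comp: "finite Q \<Longrightarrow> cl M \<Longrightarrow> cl N \<Longrightarrow> a \<in> sdom Q A \<Longrightarrow>
  vapp (sem Q (comp_tm A M N)) a = vapp (sem Q N) (vapp (sem Q M) a)"
  by (simp add: comp_tm_def sem_abs)



lemma ap_id: "finite Q \<Longrightarrow> a \<in> sdom Q A \<Longrightarrow> vapp (sem Q (id_tm A)) a = a"
  by (simp add: id_tm_def sem_abs)

lemma ap_in: "finite Q \<Longrightarrow> typing [] M (TyArr A B) \<Longrightarrow> a \<in> sdom Q A \<Longrightarrow> vapp (sem Q M) a \<in> sdom Q B"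
  using vapp_in sem_in by metis

lemma Q_cmp:
  assumes fin: "finite Q" and M: "typing [] M (TyArr A B)" and N: "typing [] N (TyArr B C)"
  shows "Cmp (LamQ Q) A B C (clsQ Q (TyArr B C) N) (clsQ Q (TyArr A B) M) = clsQ Q (TyArr A C) (comp_tm A M N)"
proof -
  have X1: "\<And>M' N'. M' \<in> clsQ Q (TyArr A B) M \<Longrightarrow> N' \<in> clsQ Q (TyArr B C) N \<Longrightarrow>
     typing [] (comp_tm A M' N') (TyArr A C) \<and> sem Q (comp_tm A M' N') = sem Q (comp_tm A M N)"
  proof -
    fix M' N' assume "M' \<in> clsQ Q (TyArr A B) M" "N' \<in> clsQ Q (TyArr B C) N"
    then have M': "typing [] M' (TyArr A B)" "sem Q M = sem Q M'" and N': "typing [] N' (TyArr B C)" "sem Q N = sem Q N'"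
      by (auto simp: mem_clsQ)
    show "typing [] (comp_tm A M' N') (TyArr A C) \<and> sem Q (comp_tm A M' N') = sem Q (comp_tm A M N)"
      using M' N' M N by (auto intro!: semQ_ext[OF fin] simp: ap_comp[OF fin] clI)
  qed
  have X2: "M \<in> clsQ Q (TyArr A B) M" "N \<in> clsQ Q (TyArr B C) N" using M N by (auto simp: mem_clsQ)
  have MN: "typing [] (comp_tm A M N) (TyArr A C)" using M N by blast
  show ?thesis unfolding LamQ_Cmp
  proof (rule set_eqI, rule iffI)
    fix K assume "K \<in> {K. \<exists>N'\<in>clsQ Q (TyArr B C) N. \<exists>M'\<in>clsQ Q (TyArr A B) M. simQ Q (TyArr A C) (comp_tm A M' N') K}"
    then obtain M' N' where "M' \<in> clsQ Q (TyArr A B) M" "N' \<in> clsQ Q (TyArr B C) N" "simQ Q (TyArr A C) (comp_tm A M' N') K"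
      by blast
    with X1[of M' N'] show "K \<in> clsQ Q (TyArr A C) (comp_tm A M N)" using MN by (simp add: simQ_def mem_clsQ)
  next
    fix K assume "K \<in> clsQ Q (TyArr A C) (comp_tm A M N)"
    then have "simQ Q (TyArr A C) (comp_tm A M N) K" by (simp add: clsQ_def)
    with X2 show "K \<in> {K. \<exists>N'\<in>clsQ Q (TyArr B C) N. \<exists>M'\<in>clsQ Q (TyArr A B) M. simQ Q (TyArr A C) (comp_tm A M' N') K}"
      by blast
  qed
qed

lemma LamQ_cat: assumes fin: "finite Q" shows "is_category (LamQ Q)"
  unfolding is_category_def
proof (intro conjI ballI)
  fix A show "Idm (LamQ Q) A \<in> Hom (LamQ Q) A A" by (simp add: LamQ_Idm HomQ_I)
next
  fix A B D f g assume "f \<in> Hom (LamQ Q) A B" "g \<in> Hom (LamQ Q) B D"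
  then obtain M N where "typing [] M (TyArr A B)" "f = clsQ Q (TyArr A B) M"
     "typing [] N (TyArr B D)" "g = clsQ Q (TyArr B D) N" by (auto elim!: HomQ_E)
  then show "Cmp (LamQ Q) A B D g f \<in> Hom (LamQ Q) A D"
    by (simp add: Q_cmp[OF fin] HomQ_I typing_comp)
next
  fix A B f assume "f \<in> Hom (LamQ Q) A B"
  then obtain M where M: "typing [] M (TyArr A B)" "f = clsQ Q (TyArr A B) M" by (auto elim: HomQ_E)
  have "clsQ Q (TyArr A B) (comp_tm A M (id_tm B)) = clsQ Q (TyArr A B) M"
    by (rule clsQ_eqI[OF fin]) (use M in \<open>simp_all add: ap_comp[OF fin] ap_id[OF fin] ap_in[OF fin M(1)] typing_comp[OF M(1) typing_id] clI\<close>)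
  then show "Cmp (LamQ Q) A B B (Idm (LamQ Q) B) f = f"
    using M by (simp add: LamQ_Idm Q_cmp[OF fin])
  have "clsQ Q (TyArr A B) (comp_tm A (id_tm A) M) = clsQ Q (TyArr A B) M"
    by (rule clsQ_eqI[OF fin]) (use M in \<open>simp_all add: ap_comp[OF fin] ap_id[OF fin] typing_comp[OF typing_id M(1)] clI\<close>)
  then show "Cmp (LamQ Q) A A B f (Idm (LamQ Q) A) = f"
    using M by (simp add: LamQ_Idm Q_cmp[OF fin])
next
  fix A B D E f g h assume "f \<in> Hom (LamQ Q) A B" "g \<in> Hom (LamQ Q) B D" "h \<in> Hom (LamQ Q) D E"
  then obtain M N K where M: "typing [] M (TyArr A B)" "f = clsQ Q (TyArr A B) M"
     and N: "typing [] N (TyArr B D)" "g = clsQ Q (TyArr B D) N"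
     and K: "typing [] K (TyArr D E)" "h = clsQ Q (TyArr D E) K"
    by (auto elim!: HomQ_E)
  have MN: "typing [] (comp_tm A M N) (TyArr A D)" using M N typing_comp by blast
  have NK: "typing [] (comp_tm B N K) (TyArr B E)" using K N typing_comp by blast
  note T = typing_comp[OF MN K(1)] typing_comp[OF M(1) NK]
  have "clsQ Q (TyArr A E) (comp_tm A (comp_tm A M N) K) = clsQ Q (TyArr A E) (comp_tm A M (comp_tm B N K))"
    by (rule clsQ_eqI[OF fin]) (use M N K in \<open>simp_all add: ap_comp[OF fin] ap_in[OF fin M(1)] ap_in[OF fin N(1)] T clI cl_comp[OF M(1) N(1)] cl_comp[OF N(1) K(1)]\<close>)
  then show "Cmp (LamQ Q) A D E h (Cmp (LamQ Q) A B D g f) = Cmp (LamQ Q) A B E (Cmp (LamQ Q) B D E h g) f"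
    using M N K by (simp add: Q_cmp[OF fin] MN NK)
qed


lemma cl_curT[simp]: "typing [] F (TyArr R B) \<Longrightarrow> typing [] U (TyArr (TyProd X A) R) \<Longrightarrow> cl (curT X A F U)"
  using clI typing_curT by blast

lemma prod_val: "v \<in> sdom Q (TyProd A B) \<Longrightarrow> v = VP (vfst v) (vsnd v) \<and> vfst v \<in> sdom Q A \<and> vsnd v \<in> sdom Q B"
  by (cases v) auto

lemma VP_in_sdom[simp]: "VP a b \<in> sdom Q (TyProd A B) \<longleftrightarrow> a \<in> sdom Q A \<and> b \<in> sdom Q B"
  by auto

lemma ap_fst: "finite Q \<Longrightarrow> x \<in> sdom Q (TyProd A B) \<Longrightarrow> vapp (sem Q (fstT A B)) x = vfst x"
  by (simp add: fstT_def sem_abs)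
lemma ap_snd: "finite Q \<Longrightarrow> x \<in> sdom Q (TyProd A B) \<Longrightarrow> vapp (sem Q (sndT A B)) x = vsnd x"
  by (simp add: sndT_def sem_abs)
lemma ap_ev: "finite Q \<Longrightarrow> x \<in> sdom Q (TyProd (TyArr A B) A) \<Longrightarrow> vapp (sem Q (evT A B)) x = vapp (vfst x) (vsnd x)"
  by (simp add: evT_def sem_abs)
lemma ap_pair: "finite Q \<Longrightarrow> cl F \<Longrightarrow> cl G \<Longrightarrow> x \<in> sdom Q X \<Longrightarrow>
  vapp (sem Q (pairT X F G)) x = VP (vapp (sem Q F) x) (vapp (sem Q G) x)"
  by (simp add: pairT_def sem_abs)
lemma ap_cur: "finite Q \<Longrightarrow> cl F \<Longrightarrow> cl U \<Longrightarrow> x \<in> sdom Q X \<Longrightarrow> a \<in> sdom Q A \<Longrightarrow>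
  vapp (vapp (sem Q (curT X A F U)) x) a = vapp (sem Q F) (vapp (sem Q U) (VP x a))"
  by (simp add: curT_def sem_abs vapp_VF_graph)
lemma ap_unit: "finite Q \<Longrightarrow> x \<in> sdom Q X \<Longrightarrow> vapp (sem Q (unitT X)) x = VU"
  by (simp add: unitT_def sem_abs)

lemma termQ: assumes fin: "finite Q" shows "is_terminal (LamQ Q) TyOne"
  unfolding is_terminal_def
proof (intro conjI ballI)
  show "TyOne \<in> Obj (LamQ Q)" by simp
  fix X
  show "\<exists>!h. h \<in> Hom (LamQ Q) X TyOne"
  proof (rule ex1I[of _ "clsQ Q (TyArr X TyOne) (unitT X)"])
    show "clsQ Q (TyArr X TyOne) (unitT X) \<in> Hom (LamQ Q) X TyOne" by (simp add: HomQ_I)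
    fix h assume "h \<in> Hom (LamQ Q) X TyOne"
    then obtain M where M: "typing [] M (TyArr X TyOne)" "h = clsQ Q (TyArr X TyOne) M" by (auto elim: HomQ_E)
    have "\<And>a. a \<in> sdom Q X \<Longrightarrow> vapp (sem Q M) a = VU" using ap_in[OF fin M(1)] by simp
    then show "h = clsQ Q (TyArr X TyOne) (unitT X)"
      unfolding M(2) by (intro clsQ_eqI[OF fin M(1)]) (simp_all add: ap_unit[OF fin])
  qed
qed

lemma prodQ: assumes fin: "finite Q"
  shows "is_product (LamQ Q) A B (TyProd A B) (clsQ Q (TyArr (TyProd A B) A) (fstT A B))
           (clsQ Q (TyArr (TyProd A B) B) (sndT A B))"
  unfolding is_product_def
proof (intro conjI ballI)
  show "TyProd A B \<in> Obj (LamQ Q)" by simp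
  show "clsQ Q (TyArr (TyProd A B) A) (fstT A B) \<in> Hom (LamQ Q) (TyProd A B) A" by (simp add: HomQ_I)
  show "clsQ Q (TyArr (TyProd A B) B) (sndT A B) \<in> Hom (LamQ Q) (TyProd A B) B" by (simp add: HomQ_I)
  fix X f g assume "f \<in> Hom (LamQ Q) X A" "g \<in> Hom (LamQ Q) X B"
  then obtain F G where F: "typing [] F (TyArr X A)" "f = clsQ Q (TyArr X A) F"
    and G: "typing [] G (TyArr X B)" "g = clsQ Q (TyArr X B) G" by (auto elim!: HomQ_E)
  have FG: "typing [] (pairT X F G) (TyArr X (TyProd A B))" using F G by blast
  have clFG: "cl F" "cl G" using F G clI by auto
  have c1: "Cmp (LamQ Q) X (TyProd A B) A (clsQ Q (TyArr (TyProd A B) A) (fstT A B)) (clsQ Q (TyArr X (TyProd A B)) (pairT X F G)) = f"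
    unfolding Q_cmp[OF fin FG typing_fstT] F(2)
    by (rule clsQ_eqI[OF fin typing_comp[OF FG typing_fstT] F(1)])
       (simp add: ap_comp[OF fin] ap_pair[OF fin] ap_fst[OF fin] clFG clI[OF FG] ap_in[OF fin F(1)] ap_in[OF fin G(1)])
  have c2: "Cmp (LamQ Q) X (TyProd A B) B (clsQ Q (TyArr (TyProd A B) B) (sndT A B)) (clsQ Q (TyArr X (TyProd A B)) (pairT X F G)) = g"
    unfolding Q_cmp[OF fin FG typing_sndT] G(2)
    by (rule clsQ_eqI[OF fin typing_comp[OF FG typing_sndT] G(1)])
       (simp add: ap_comp[OF fin] ap_pair[OF fin] ap_snd[OF fin] clFG clI[OF FG] ap_in[OF fin F(1)] ap_in[OF fin G(1)])
  show "\<exists>!h. h \<in> Hom (LamQ Q) X (TyProd A B) \<and>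
      Cmp (LamQ Q) X (TyProd A B) A (clsQ Q (TyArr (TyProd A B) A) (fstT A B)) h = f \<and>
      Cmp (LamQ Q) X (TyProd A B) B (clsQ Q (TyArr (TyProd A B) B) (sndT A B)) h = g"
  proof (rule ex1I[of _ "clsQ Q (TyArr X (TyProd A B)) (pairT X F G)"])
    show "clsQ Q (TyArr X (TyProd A B)) (pairT X F G) \<in> Hom (LamQ Q) X (TyProd A B) \<and>
      Cmp (LamQ Q) X (TyProd A B) A (clsQ Q (TyArr (TyProd A B) A) (fstT A B)) (clsQ Q (TyArr X (TyProd A B)) (pairT X F G)) = f \<and>
      Cmp (LamQ Q) X (TyProd A B) B (clsQ Q (TyArr (TyProd A B) B) (sndT A B)) (clsQ Q (TyArr X (TyProd A B)) (pairT X F G)) = g"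
      using c1 c2 HomQ_I[OF FG] by blast
    fix h assume h: "h \<in> Hom (LamQ Q) X (TyProd A B) \<and>
      Cmp (LamQ Q) X (TyProd A B) A (clsQ Q (TyArr (TyProd A B) A) (fstT A B)) h = f \<and>
      Cmp (LamQ Q) X (TyProd A B) B (clsQ Q (TyArr (TyProd A B) B) (sndT A B)) h = g"
    then obtain H where H: "typing [] H (TyArr X (TyProd A B))" "h = clsQ Q (TyArr X (TyProd A B)) H"
      by (auto elim: HomQ_E)
    have e1: "clsQ Q (TyArr X A) (comp_tm X H (fstT A B)) = clsQ Q (TyArr X A) F"
      using h H F by (simp add: Q_cmp[OF fin])
    have e2: "clsQ Q (TyArr X B) (comp_tm X H (sndT A B)) = clsQ Q (TyArr X B) G"
      using h H G by (simp add: Q_cmp[OF fin])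
    show "h = clsQ Q (TyArr X (TyProd A B)) (pairT X F G)"
      unfolding H(2)
    proof (rule clsQ_eqI[OF fin H(1) FG])
      fix a assume a: "a \<in> sdom Q X"
      have v: "vapp (sem Q H) a \<in> sdom Q (TyProd A B)" using ap_in[OF fin H(1) a] .
      have "vfst (vapp (sem Q H) a) = vapp (sem Q F) a"
        using clsQ_apD[OF e1 typing_comp[OF H(1) typing_fstT] F(1), of a] a v
        by (simp add: ap_comp[OF fin] clI[OF H(1)] ap_fst[OF fin])
      moreover have "vsnd (vapp (sem Q H) a) = vapp (sem Q G) a"
        using clsQ_apD[OF e2 typing_comp[OF H(1) typing_sndT] G(1), of a] a v
        by (simp add: ap_comp[OF fin] clI[OF H(1)] ap_snd[OF fin])
      ultimately show "vapp (sem Q H) a = vapp (sem Q (pairT X F G)) a"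
        using prod_val[OF v] a by (simp add: ap_pair[OF fin] clFG)
    qed
  qed
qed


lemma ex1_eq: "\<exists>!x. P x \<Longrightarrow> P a \<Longrightarrow> P b \<Longrightarrow> a = b" by blast

lemma prodQ_sem:
  assumes fin: "finite Q" and prodR: "is_product (LamQ Q) X A R r1 r2"
  obtains R1 R2 U where "typing [] R1 (TyArr R X)" "r1 = clsQ Q (TyArr R X) R1"
    "typing [] R2 (TyArr R A)" "r2 = clsQ Q (TyArr R A) R2" "typing [] U (TyArr (TyProd X A) R)"
    "\<And>x a. x \<in> sdom Q X \<Longrightarrow> a \<in> sdom Q A \<Longrightarrow> vapp (sem Q R1) (vapp (sem Q U) (VP x a)) = x"
    "\<And>x a. x \<in> sdom Q X \<Longrightarrow> a \<in> sdom Q A \<Longrightarrow> vapp (sem Q R2) (vapp (sem Q U) (VP x a)) = a"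
    "\<And>r. r \<in> sdom Q R \<Longrightarrow> vapp (sem Q U) (VP (vapp (sem Q R1) r) (vapp (sem Q R2) r)) = r"
proof -
  have r1: "r1 \<in> Hom (LamQ Q) R X" and r2: "r2 \<in> Hom (LamQ Q) R A" using prodR unfolding is_product_def by auto
  obtain R1 where R1: "typing [] R1 (TyArr R X)" "r1 = clsQ Q (TyArr R X) R1" using r1 by (auto elim: HomQ_E)
  obtain R2 where R2: "typing [] R2 (TyArr R A)" "r2 = clsQ Q (TyArr R A) R2" using r2 by (auto elim: HomQ_E)
  have uP: "\<And>Y f g. f \<in> Hom (LamQ Q) Y X \<Longrightarrow> g \<in> Hom (LamQ Q) Y A \<Longrightarrow>
      \<exists>!h. h \<in> Hom (LamQ Q) Y R \<and> Cmp (LamQ Q) Y R X r1 h = f \<and> Cmp (LamQ Q) Y R A r2 h = g"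
    using prodR unfolding is_product_def by auto
  obtain u where u: "u \<in> Hom (LamQ Q) (TyProd X A) R"
    "Cmp (LamQ Q) (TyProd X A) R X r1 u = clsQ Q (TyArr (TyProd X A) X) (fstT X A)"
    "Cmp (LamQ Q) (TyProd X A) R A r2 u = clsQ Q (TyArr (TyProd X A) A) (sndT X A)"
    using uP[OF HomQ_I[OF typing_fstT] HomQ_I[OF typing_sndT]] by blast
  obtain U where U: "typing [] U (TyArr (TyProd X A) R)" "u = clsQ Q (TyArr (TyProd X A) R) U"
    using u(1) by (auto elim: HomQ_E)
  have e1: "clsQ Q (TyArr (TyProd X A) X) (comp_tm (TyProd X A) U R1) = clsQ Q (TyArr (TyProd X A) X) (fstT X A)"
    using u(2) by (simp add: U R1 Q_cmp[OF fin])
  have e2: "clsQ Q (TyArr (TyProd X A) A) (comp_tm (TyProd X A) U R2) = clsQ Q (TyArr (TyProd X A) A) (sndT X A)"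
    using u(3) by (simp add: U R2 Q_cmp[OF fin])
  have cls: "cl R1" "cl R2" "cl U" using R1 R2 U clI by auto
  have p1: "vapp (sem Q R1) (vapp (sem Q U) (VP x a)) = x" if "x \<in> sdom Q X" "a \<in> sdom Q A" for x a
    using clsQ_apD[OF e1 typing_comp[OF U(1) R1(1)] typing_fstT, of "VP x a"] that
    by (simp add: ap_comp[OF fin] ap_fst[OF fin] cls)
  have p2: "vapp (sem Q R2) (vapp (sem Q U) (VP x a)) = a" if "x \<in> sdom Q X" "a \<in> sdom Q A" for x a
    using clsQ_apD[OF e2 typing_comp[OF U(1) R2(1)] typing_sndT, of "VP x a"] that
    by (simp add: ap_comp[OF fin] ap_snd[OF fin] cls)
  define W where "W = comp_tm R (pairT R R1 R2) U"
  have PR: "typing [] (pairT R R1 R2) (TyArr R (TyProd X A))" using R1 R2 by blast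
  have W: "typing [] W (TyArr R R)" unfolding W_def using PR U by blast
  have apW: "vapp (sem Q W) r = vapp (sem Q U) (VP (vapp (sem Q R1) r) (vapp (sem Q R2) r))" if "r \<in> sdom Q R" for r
    unfolding W_def using that by (simp add: ap_comp[OF fin] ap_pair[OF fin] cls clI[OF PR])
  have w1: "Cmp (LamQ Q) R R X r1 (clsQ Q (TyArr R R) W) = r1"
    unfolding R1(2) Q_cmp[OF fin W R1(1)]
    by (rule clsQ_eqI[OF fin typing_comp[OF W R1(1)] R1(1)])
       (simp add: ap_comp[OF fin] clI[OF W] cls apW p1 ap_in[OF fin R1(1)] ap_in[OF fin R2(1)])
  have w2: "Cmp (LamQ Q) R R A r2 (clsQ Q (TyArr R R) W) = r2"
    unfolding R2(2) Q_cmp[OF fin W R2(1)]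
    by (rule clsQ_eqI[OF fin typing_comp[OF W R2(1)] R2(1)])
       (simp add: ap_comp[OF fin] clI[OF W] cls apW p2 ap_in[OF fin R1(1)] ap_in[OF fin R2(1)])
  have i1: "Cmp (LamQ Q) R R X r1 (Idm (LamQ Q) R) = r1" and i2: "Cmp (LamQ Q) R R A r2 (Idm (LamQ Q) R) = r2"
    using cat_idr[OF LamQ_cat[OF fin]] r1 r2 by auto
  have PW: "clsQ Q (TyArr R R) W \<in> Hom (LamQ Q) R R \<and> Cmp (LamQ Q) R R X r1 (clsQ Q (TyArr R R) W) = r1
     \<and> Cmp (LamQ Q) R R A r2 (clsQ Q (TyArr R R) W) = r2" using HomQ_I[OF W] w1 w2 by blast
  have PI: "Idm (LamQ Q) R \<in> Hom (LamQ Q) R R \<and> Cmp (LamQ Q) R R X r1 (Idm (LamQ Q) R) = r1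
     \<and> Cmp (LamQ Q) R R A r2 (Idm (LamQ Q) R) = r2" using cat_id[OF LamQ_cat[OF fin], of R] i1 i2 by simp
  have "clsQ Q (TyArr R R) W = Idm (LamQ Q) R"
    by (rule ex1_eq[OF uP[OF r1 r2] PW PI])
  then have WI: "clsQ Q (TyArr R R) W = clsQ Q (TyArr R R) (id_tm R)" by (simp add: LamQ_Idm)
  have p3: "vapp (sem Q U) (VP (vapp (sem Q R1) r) (vapp (sem Q R2) r)) = r" if "r \<in> sdom Q R" for r
    using clsQ_apD[OF WI W typing_id, of r] that apW by (simp add: ap_id[OF fin])
  show ?thesis by (rule that[OF R1(1) R1(2) R2(1) R2(2) U(1) p1 p2 p3])
qed

declare sdom.simps(3,4)[simp del]

lemma expQ: assumes fin: "finite Q"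
  shows "is_exponential (LamQ Q) A B (TyArr A B) (TyProd (TyArr A B) A)
     (clsQ Q (TyArr (TyProd (TyArr A B) A) (TyArr A B)) (fstT (TyArr A B) A))
     (clsQ Q (TyArr (TyProd (TyArr A B) A) A) (sndT (TyArr A B) A))
     (clsQ Q (TyArr (TyProd (TyArr A B) A) B) (evT A B))"
  unfolding is_exponential_def
proof (intro conjI allI impI ballI)
  let ?E = "TyArr A B" and ?P = "TyProd (TyArr A B) A"
  show "?E \<in> Obj (LamQ Q)" by simp
  show "is_product (LamQ Q) ?E A ?P (clsQ Q (TyArr ?P ?E) (fstT ?E A)) (clsQ Q (TyArr ?P A) (sndT ?E A))"
    using prodQ[OF fin] .
  show "clsQ Q (TyArr ?P B) (evT A B) \<in> Hom (LamQ Q) ?P B" by (simp add: HomQ_I)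
  fix X R r1 r2 f assume X: "X \<in> Obj (LamQ Q)" and prodR: "is_product (LamQ Q) X A R r1 r2"
    and f: "f \<in> Hom (LamQ Q) R B"
  obtain Fm where Fm: "typing [] Fm (TyArr R B)" "f = clsQ Q (TyArr R B) Fm" using f by (auto elim: HomQ_E)
  obtain R1 R2 U where R1: "typing [] R1 (TyArr R X)" "r1 = clsQ Q (TyArr R X) R1"
    and R2: "typing [] R2 (TyArr R A)" "r2 = clsQ Q (TyArr R A) R2" and U: "typing [] U (TyArr (TyProd X A) R)"
    and p1: "\<And>x a. x \<in> sdom Q X \<Longrightarrow> a \<in> sdom Q A \<Longrightarrow> vapp (sem Q R1) (vapp (sem Q U) (VP x a)) = x"
    and p2: "\<And>x a. x \<in> sdom Q X \<Longrightarrow> a \<in> sdom Q A \<Longrightarrow> vapp (sem Q R2) (vapp (sem Q U) (VP x a)) = a"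
    and p3: "\<And>r. r \<in> sdom Q R \<Longrightarrow> vapp (sem Q U) (VP (vapp (sem Q R1) r) (vapp (sem Q R2) r)) = r"
    using prodQ_sem[OF fin prodR] by metis
  have cls: "cl R1" "cl R2" "cl U" "cl Fm" using R1 R2 U Fm clI by auto
  define H where "H = curT X A Fm U"
  have H: "typing [] H (TyArr X (TyArr A B))" unfolding H_def using Fm U by blast
  have R1H: "typing [] (comp_tm R R1 H) (TyArr R ?E)" using R1 H by blast
  define K where "K = pairT R (comp_tm R R1 H) R2"
  have K: "typing [] K (TyArr R ?P)" unfolding K_def using R1H R2 by blast
  have apH: "vapp (vapp (sem Q H) x) a = vapp (sem Q Fm) (vapp (sem Q U) (VP x a))"
    if "x \<in> sdom Q X" "a \<in> sdom Q A" for x a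
    unfolding H_def using that by (simp add: ap_cur[OF fin] cls)
  have apK: "vapp (sem Q K) r = VP (vapp (sem Q H) (vapp (sem Q R1) r)) (vapp (sem Q R2) r)"
    if "r \<in> sdom Q R" for r
    unfolding K_def using that by (simp add: ap_pair[OF fin] ap_comp[OF fin] cls clI[OF H] clI[OF R1H])
  have inK: "vapp (sem Q K) r \<in> sdom Q ?P" if "r \<in> sdom Q R" for r using ap_in[OF fin K that] .
  note ins = ap_in[OF fin R1(1)] ap_in[OF fin R2(1)] ap_in[OF fin H]
  have k1: "Cmp (LamQ Q) R ?P ?E (clsQ Q (TyArr ?P ?E) (fstT ?E A)) (clsQ Q (TyArr R ?P) K)
        = Cmp (LamQ Q) R X ?E (clsQ Q (TyArr X ?E) H) r1"
    unfolding R1(2) Q_cmp[OF fin K typing_fstT] Q_cmp[OF fin R1(1) H]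
    by (rule clsQ_eqI[OF fin typing_comp[OF K typing_fstT] R1H])
       (simp add: ap_comp[OF fin] cls clI[OF K] clI[OF H] ap_fst[OF fin] inK apK ins)
  have k2: "Cmp (LamQ Q) R ?P A (clsQ Q (TyArr ?P A) (sndT ?E A)) (clsQ Q (TyArr R ?P) K) = r2"
    unfolding R2(2) Q_cmp[OF fin K typing_sndT]
    by (rule clsQ_eqI[OF fin typing_comp[OF K typing_sndT] R2(1)])
       (simp add: ap_comp[OF fin] cls clI[OF K] ap_snd[OF fin] inK apK ins)
  have k3: "Cmp (LamQ Q) R ?P B (clsQ Q (TyArr ?P B) (evT A B)) (clsQ Q (TyArr R ?P) K) = f"
    unfolding Fm(2) Q_cmp[OF fin K typing_evT]
    by (rule clsQ_eqI[OF fin typing_comp[OF K typing_evT] Fm(1)])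
       (simp add: ap_comp[OF fin] cls clI[OF K] ap_ev[OF fin] inK apK apH ins p3)
  show "\<exists>!h. h \<in> Hom (LamQ Q) X ?E \<and>
     (\<exists>k\<in>Hom (LamQ Q) R ?P. Cmp (LamQ Q) R ?P ?E (clsQ Q (TyArr ?P ?E) (fstT ?E A)) k = Cmp (LamQ Q) R X ?E h r1 \<and>
        Cmp (LamQ Q) R ?P A (clsQ Q (TyArr ?P A) (sndT ?E A)) k = r2 \<and>
        Cmp (LamQ Q) R ?P B (clsQ Q (TyArr ?P B) (evT A B)) k = f)"
  proof (rule ex1I[of _ "clsQ Q (TyArr X ?E) H"])
    show "clsQ Q (TyArr X ?E) H \<in> Hom (LamQ Q) X ?E \<and>
     (\<exists>k\<in>Hom (LamQ Q) R ?P. Cmp (LamQ Q) R ?P ?E (clsQ Q (TyArr ?P ?E) (fstT ?E A)) k = Cmp (LamQ Q) R X ?E (clsQ Q (TyArr X ?E) H) r1 \<and>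
        Cmp (LamQ Q) R ?P A (clsQ Q (TyArr ?P A) (sndT ?E A)) k = r2 \<and>
        Cmp (LamQ Q) R ?P B (clsQ Q (TyArr ?P B) (evT A B)) k = f)"
      using HomQ_I[OF H] HomQ_I[OF K] k1 k2 k3 by blast
    fix h assume "h \<in> Hom (LamQ Q) X ?E \<and>
     (\<exists>k\<in>Hom (LamQ Q) R ?P. Cmp (LamQ Q) R ?P ?E (clsQ Q (TyArr ?P ?E) (fstT ?E A)) k = Cmp (LamQ Q) R X ?E h r1 \<and>
        Cmp (LamQ Q) R ?P A (clsQ Q (TyArr ?P A) (sndT ?E A)) k = r2 \<and>
        Cmp (LamQ Q) R ?P B (clsQ Q (TyArr ?P B) (evT A B)) k = f)"
    then obtain k where h: "h \<in> Hom (LamQ Q) X ?E" and k: "k \<in> Hom (LamQ Q) R ?P"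
      and hk1: "Cmp (LamQ Q) R ?P ?E (clsQ Q (TyArr ?P ?E) (fstT ?E A)) k = Cmp (LamQ Q) R X ?E h r1"
      and hk2: "Cmp (LamQ Q) R ?P A (clsQ Q (TyArr ?P A) (sndT ?E A)) k = r2"
      and hk3: "Cmp (LamQ Q) R ?P B (clsQ Q (TyArr ?P B) (evT A B)) k = f" by blast
    obtain H' where H': "typing [] H' (TyArr X ?E)" "h = clsQ Q (TyArr X ?E) H'" using h by (auto elim: HomQ_E)
    obtain K' where K': "typing [] K' (TyArr R ?P)" "k = clsQ Q (TyArr R ?P) K'" using k by (auto elim: HomQ_E)
    have e1: "clsQ Q (TyArr R ?E) (comp_tm R K' (fstT ?E A)) = clsQ Q (TyArr R ?E) (comp_tm R R1 H')"
      using hk1 by (simp add: K' H' R1 Q_cmp[OF fin])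
    have e2: "clsQ Q (TyArr R A) (comp_tm R K' (sndT ?E A)) = clsQ Q (TyArr R A) R2"
      using hk2 by (simp add: K' R2 Q_cmp[OF fin])
    have e3: "clsQ Q (TyArr R B) (comp_tm R K' (evT A B)) = clsQ Q (TyArr R B) Fm"
      using hk3 by (simp add: K' Fm Q_cmp[OF fin])
    have clK': "cl K'" "cl H'" using K' H' clI by auto
    have key: "vapp (vapp (sem Q H') (vapp (sem Q R1) r)) (vapp (sem Q R2) r) = vapp (sem Q Fm) r"
      if r: "r \<in> sdom Q R" for r
    proof -
      have v: "vapp (sem Q K') r \<in> sdom Q ?P" using ap_in[OF fin K'(1) r] .
      have a1: "vfst (vapp (sem Q K') r) = vapp (sem Q H') (vapp (sem Q R1) r)"
        using clsQ_apD[OF e1 typing_comp[OF K'(1) typing_fstT] typing_comp[OF R1(1) H'(1)], of r] r v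
        by (simp add: ap_comp[OF fin] clK' cls ap_fst[OF fin])
      have a2: "vsnd (vapp (sem Q K') r) = vapp (sem Q R2) r"
        using clsQ_apD[OF e2 typing_comp[OF K'(1) typing_sndT] R2(1), of r] r v
        by (simp add: ap_comp[OF fin] clK' cls ap_snd[OF fin])
      have a3: "vapp (vfst (vapp (sem Q K') r)) (vsnd (vapp (sem Q K') r)) = vapp (sem Q Fm) r"
        using clsQ_apD[OF e3 typing_comp[OF K'(1) typing_evT] Fm(1), of r] r v
        by (simp add: ap_comp[OF fin] clK' cls ap_ev[OF fin])
      show ?thesis using a1 a2 a3 by simp
    qed
    show "h = clsQ Q (TyArr X ?E) H"
      unfolding H'(2)
    proof (rule clsQ_eqI[OF fin H'(1) H])
      fix x assume x: "x \<in> sdom Q X"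
      show "vapp (sem Q H') x = vapp (sem Q H) x"
      proof (rule arr_ext[OF ap_in[OF fin H'(1) x] ap_in[OF fin H x]])
        fix a assume a: "a \<in> sdom Q A"
        have r: "vapp (sem Q U) (VP x a) \<in> sdom Q R" using ap_in[OF fin U] x a by simp
        show "vapp (vapp (sem Q H') x) a = vapp (vapp (sem Q H) x) a"
          using key[OF r] p1[OF x a] p2[OF x a] apH[OF x a] by simp
      qed
    qed
  qed
qed

declare sdom.simps(3,4)[simp]

lemma LamQ_ccc: assumes fin: "finite Q" shows "cartesian_closed (LamQ Q)"
  unfolding cartesian_closed_def
  using LamQ_cat[OF fin] termQ[OF fin] prodQ[OF fin] expQ[OF fin] by blast


lemma subst_lift: "subst (lift k M) k N = M"
  by (induction M arbitrary: k N) auto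

lemma bapp1: "beq \<Gamma> M M' (TyArr A B) \<Longrightarrow> typing \<Gamma> N A \<Longrightarrow> beq \<Gamma> (TApp M N) (TApp M' N) B"
  by (rule beq_app) (auto intro: beq_refl)
lemma bapp2: "typing \<Gamma> M (TyArr A B) \<Longrightarrow> beq \<Gamma> N N' A \<Longrightarrow> beq \<Gamma> (TApp M N) (TApp M N') B"
  by (rule beq_app) (auto intro: beq_refl)

lemma b_comp: "typing [] M (TyArr A B) \<Longrightarrow> typing [] N (TyArr B C) \<Longrightarrow> typing \<Gamma> x A \<Longrightarrow>
  beq \<Gamma> (TApp (comp_tm A M N) x) (TApp N (TApp M x)) C"
proof -
  assume M: "typing [] M (TyArr A B)" and N: "typing [] N (TyArr B C)" and x: "typing \<Gamma> x A"
  have "typing (A # \<Gamma>) (TApp N (TApp M (TVar 0))) C"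
    using M N by (meson typing.t_app typing_closed t_var0)
  from beq_beta[OF this x] show ?thesis
    using M N clI[OF M] clI[OF N] by (simp add: comp_tm_def)
qed

lemma b_id: "typing \<Gamma> x A \<Longrightarrow> beq \<Gamma> (TApp (id_tm A) x) x A"
  using beq_beta[of A \<Gamma> "TVar 0" A x] by (simp add: id_tm_def)

lemma b_pair: "typing [] F (TyArr X A) \<Longrightarrow> typing [] G (TyArr X B) \<Longrightarrow> typing \<Gamma> x X \<Longrightarrow>
  beq \<Gamma> (TApp (pairT X F G) x) (TPair (TApp F x) (TApp G x)) (TyProd A B)"
proof -
  assume F: "typing [] F (TyArr X A)" and G: "typing [] G (TyArr X B)" and x: "typing \<Gamma> x X"
  have "typing (X # \<Gamma>) (TPair (TApp F (TVar 0)) (TApp G (TVar 0))) (TyProd A B)"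
    using F G by (meson typing.t_app typing.t_pair typing_closed t_var0)
  from beq_beta[OF this x] show ?thesis
    using clI[OF F] clI[OF G] by (simp add: pairT_def)
qed

lemma b_fst: "typing \<Gamma> y (TyProd A B) \<Longrightarrow> beq \<Gamma> (TApp (fstT A B) y) (TFst y) A"
  using beq_beta[of "TyProd A B" \<Gamma> "TFst (TVar 0)" A y] by (simp add: fstT_def typing.t_fst[of _ _ _ B])
lemma b_snd: "typing \<Gamma> y (TyProd A B) \<Longrightarrow> beq \<Gamma> (TApp (sndT A B) y) (TSnd y) B"
  using beq_beta[of "TyProd A B" \<Gamma> "TSnd (TVar 0)" B y] by (simp add: sndT_def typing.t_snd[of _ _ A])
lemma b_ev: "typing \<Gamma> y (TyProd (TyArr A B) A) \<Longrightarrow> beq \<Gamma> (TApp (evT A B) y) (TApp (TFst y) (TSnd y)) B"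
proof -
  assume y: "typing \<Gamma> y (TyProd (TyArr A B) A)"
  have "typing (TyProd (TyArr A B) A # \<Gamma>) (TApp (TFst (TVar 0)) (TSnd (TVar 0))) B"
    by (rule typing.t_app[of _ _ A B], rule typing.t_fst[of _ _ _ A], rule t_var0,
      rule typing.t_snd[of _ _ "TyArr A B"], rule t_var0)
  from beq_beta[OF this y] show ?thesis by (simp add: evT_def)
qed

lemma b_cur: "typing [] F (TyArr R B) \<Longrightarrow> typing [] U (TyArr (TyProd X A) R) \<Longrightarrow>
  typing \<Gamma> y X \<Longrightarrow> typing \<Gamma> z A \<Longrightarrow>
  beq \<Gamma> (TApp (TApp (curT X A F U) y) z) (TApp F (TApp U (TPair y z))) B"
proof -
  assume F: "typing [] F (TyArr R B)" and U: "typing [] U (TyArr (TyProd X A) R)"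
    and y: "typing \<Gamma> y X" and z: "typing \<Gamma> z A"
  have cl: "cl F" "cl U" using F U clI by auto
  have body: "typing (A # X # \<Gamma>) (TApp F (TApp U (TPair (TVar 1) (TVar 0)))) B"
    by (rule typing.t_app[of _ F R B], rule typing_closed[OF F],
      rule typing.t_app[of _ U "TyProd X A" R], rule typing_closed[OF U], rule typing.t_pair, rule t_var1, rule t_var0)
  have "beq \<Gamma> (TApp (curT X A F U) y) (TAbs A (TApp F (TApp U (TPair (lift 0 y) (TVar 0))))) (TyArr A B)"
    using beq_beta[OF typing.t_abs[OF body] y] cl by (simp add: curT_def)
  then have 1: "beq \<Gamma> (TApp (TApp (curT X A F U) y) z) (TApp (TAbs A (TApp F (TApp U (TPair (lift 0 y) (TVar 0))))) z) B"
    using z by (rule bapp1)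
  have body2: "typing (A # \<Gamma>) (TApp F (TApp U (TPair (lift 0 y) (TVar 0)))) B"
    by (rule typing.t_app[of _ F R B], rule typing_closed[OF F],
      rule typing.t_app[of _ U "TyProd X A" R], rule typing_closed[OF U], rule typing.t_pair,
      rule typing_lift0[OF y], rule t_var0)
  have 2: "beq \<Gamma> (TApp (TAbs A (TApp F (TApp U (TPair (lift 0 y) (TVar 0))))) z) (TApp F (TApp U (TPair y z))) B"
    using beq_beta[OF body2 z] cl by (simp add: subst_lift)
  show ?thesis using beq_trans[OF 1 2] .
qed

lemma eta_cl: "typing [] M (TyArr A B) \<Longrightarrow> beq [] (TAbs A (TApp M (TVar 0))) M (TyArr A B)"
  using beq_eta[of "[]" M A B] clI by simp

lemma ext_L: "typing [] M (TyArr A B) \<Longrightarrow> typing [] M' (TyArr A B) \<Longrightarrow>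
  beq [A] (TApp M (TVar 0)) (TApp M' (TVar 0)) B \<Longrightarrow> beq [] M M' (TyArr A B)"
  by (meson beq_abs beq_sym beq_trans eta_cl)


definition clsL :: "ty \<Rightarrow> tm \<Rightarrow> tm set" where "clsL T M = {N. beq [] M N T}"

lemma Lam_Obj[simp]: "Obj Lam = UNIV" by (simp add: Lam_def)
lemma Lam_Hom: "Hom Lam A B = {c. \<exists>M. typing [] M (TyArr A B) \<and> c = clsL (TyArr A B) M}"
  by (simp add: Lam_def clsL_def)
lemma Lam_Idm: "Idm Lam A = clsL (TyArr A A) (id_tm A)"
  by (simp add: Lam_def clsL_def)
lemma Lam_Cmp: "Cmp Lam A B C g f = {K. \<exists>N\<in>g. \<exists>M\<in>f. beq [] (comp_tm A M N) K (TyArr A C)}"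
  by (simp add: Lam_def)

lemma HomL_I: "typing [] M (TyArr A B) \<Longrightarrow> clsL (TyArr A B) M \<in> Hom Lam A B"
  by (auto simp: Lam_Hom)
lemma HomL_E: "f \<in> Hom Lam A B \<Longrightarrow> (\<And>M. typing [] M (TyArr A B) \<Longrightarrow> f = clsL (TyArr A B) M \<Longrightarrow> P) \<Longrightarrow> P"
  by (auto simp: Lam_Hom)

lemma clsL_eq_iff: "typing [] M T \<Longrightarrow> typing [] M' T \<Longrightarrow> clsL T M = clsL T M' \<longleftrightarrow> beq [] M M' T"
proof
  assume M': "typing [] M' T" and "clsL T M = clsL T M'"
  moreover have "M' \<in> clsL T M'" using M' by (simp add: clsL_def beq_refl)
  ultimately have "M' \<in> clsL T M" by simp
  then show "beq [] M M' T" by (simp add: clsL_def)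
next
  assume "beq [] M M' T"
  then show "clsL T M = clsL T M'" unfolding clsL_def by (auto intro: beq_trans beq_sym)
qed

lemma comp_cong: "beq [] M M' (TyArr A B) \<Longrightarrow> beq [] N N' (TyArr B C) \<Longrightarrow>
  beq [] (comp_tm A M N) (comp_tm A M' N') (TyArr A C)"
proof -
  assume MM: "beq [] M M' (TyArr A B)" and NN: "beq [] N N' (TyArr B C)"
  have M: "typing [] M (TyArr A B)" "typing [] M' (TyArr A B)" using beq_typing[OF MM] by auto
  have N: "typing [] N (TyArr B C)" "typing [] N' (TyArr B C)" using beq_typing[OF NN] by auto
  have x: "typing [A] (TVar 0) A" by simp
  have 1: "beq [A] (TApp (comp_tm A M N) (TVar 0)) (TApp N (TApp M (TVar 0))) C"
    using b_comp[OF M(1) N(1) x] .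
  have 2: "beq [A] (TApp N (TApp M (TVar 0))) (TApp N' (TApp M' (TVar 0))) C"
    by (rule beq_app[OF beq_closed[OF NN]], rule bapp1[OF beq_closed[OF MM] x])
  have 3: "beq [A] (TApp N' (TApp M' (TVar 0))) (TApp (comp_tm A M' N') (TVar 0)) C"
    using beq_sym[OF b_comp[OF M(2) N(2) x]] .
  show ?thesis
    by (rule ext_L[OF typing_comp[OF M(1) N(1)] typing_comp[OF M(2) N(2)]])
       (rule beq_trans[OF beq_trans[OF 1 2] 3])
qed

lemma L_cmp:
  assumes M: "typing [] M (TyArr A B)" and N: "typing [] N (TyArr B C)"
  shows "Cmp Lam A B C (clsL (TyArr B C) N) (clsL (TyArr A B) M) = clsL (TyArr A C) (comp_tm A M N)"
  unfolding Lam_Cmp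
proof (rule set_eqI, rule iffI)
  fix K assume "K \<in> {K. \<exists>N'\<in>clsL (TyArr B C) N. \<exists>M'\<in>clsL (TyArr A B) M. beq [] (comp_tm A M' N') K (TyArr A C)}"
  then obtain M' N' where "beq [] N N' (TyArr B C)" "beq [] M M' (TyArr A B)" "beq [] (comp_tm A M' N') K (TyArr A C)"
    by (auto simp: clsL_def)
  then show "K \<in> clsL (TyArr A C) (comp_tm A M N)" unfolding clsL_def
    using comp_cong beq_trans by blast
next
  fix K assume "K \<in> clsL (TyArr A C) (comp_tm A M N)"
  moreover have "N \<in> clsL (TyArr B C) N" "M \<in> clsL (TyArr A B) M" using M N by (auto simp: clsL_def intro: beq_refl)
  ultimately show "K \<in> {K. \<exists>N'\<in>clsL (TyArr B C) N. \<exists>M'\<in>clsL (TyArr A B) M. beq [] (comp_tm A M' N') K (TyArr A C)}"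
    by (auto simp: clsL_def)
qed

lemma clsL_extI: "typing [] M (TyArr A B) \<Longrightarrow> typing [] M' (TyArr A B) \<Longrightarrow>
  beq [A] (TApp M (TVar 0)) (TApp M' (TVar 0)) B \<Longrightarrow> clsL (TyArr A B) M = clsL (TyArr A B) M'"
  using ext_L clsL_eq_iff by metis

lemma Lam_cat: "is_category Lam"
  unfolding is_category_def
proof (intro conjI ballI)
  fix A show "Idm Lam A \<in> Hom Lam A A" by (simp add: Lam_Idm HomL_I)
next
  fix A B D f g assume "f \<in> Hom Lam A B" "g \<in> Hom Lam B D"
  then obtain M N where "typing [] M (TyArr A B)" "f = clsL (TyArr A B) M"
     "typing [] N (TyArr B D)" "g = clsL (TyArr B D) N" by (auto elim!: HomL_E)
  then show "Cmp Lam A B D g f \<in> Hom Lam A D"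
    by (simp add: L_cmp HomL_I typing_comp)
next
  fix A B f assume "f \<in> Hom Lam A B"
  then obtain M where M: "typing [] M (TyArr A B)" "f = clsL (TyArr A B) M" by (auto elim: HomL_E)
  have x: "typing [A] (TVar 0) A" by simp
  have Mx: "typing [A] (TApp M (TVar 0)) B" using M(1) by (meson typing.t_app typing_closed x)
  have "clsL (TyArr A B) (comp_tm A M (id_tm B)) = clsL (TyArr A B) M"
    by (rule clsL_extI[OF typing_comp[OF M(1) typing_id] M(1)])
       (rule beq_trans[OF b_comp[OF M(1) typing_id x] b_id[OF Mx]])
  then show "Cmp Lam A B B (Idm Lam B) f = f"
    using M by (simp add: Lam_Idm L_cmp)
  have "clsL (TyArr A B) (comp_tm A (id_tm A) M) = clsL (TyArr A B) M"
    by (rule clsL_extI[OF typing_comp[OF typing_id M(1)] M(1)])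
       (rule beq_trans[OF b_comp[OF typing_id M(1) x] bapp2[OF typing_closed[OF M(1)] b_id[OF x]]])
  then show "Cmp Lam A A B f (Idm Lam A) = f"
    using M by (simp add: Lam_Idm L_cmp)
next
  fix A B D E f g h assume "f \<in> Hom Lam A B" "g \<in> Hom Lam B D" "h \<in> Hom Lam D E"
  then obtain M N K where M: "typing [] M (TyArr A B)" "f = clsL (TyArr A B) M"
     and N: "typing [] N (TyArr B D)" "g = clsL (TyArr B D) N"
     and K: "typing [] K (TyArr D E)" "h = clsL (TyArr D E) K"
    by (auto elim!: HomL_E)
  have MN: "typing [] (comp_tm A M N) (TyArr A D)" using M N typing_comp by blast
  have NK: "typing [] (comp_tm B N K) (TyArr B E)" using K N typing_comp by blast
  have x: "typing [A] (TVar 0) A" by simp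
  have Mx: "typing [A] (TApp M (TVar 0)) B" using M(1) by (meson typing.t_app typing_closed x)
  have 1: "beq [A] (TApp (comp_tm A (comp_tm A M N) K) (TVar 0)) (TApp K (TApp N (TApp M (TVar 0)))) E"
    by (rule beq_trans[OF b_comp[OF MN K(1) x] bapp2[OF typing_closed[OF K(1)] b_comp[OF M(1) N(1) x]]])
  have 2: "beq [A] (TApp (comp_tm A M (comp_tm B N K)) (TVar 0)) (TApp K (TApp N (TApp M (TVar 0)))) E"
    by (rule beq_trans[OF b_comp[OF M(1) NK x] b_comp[OF N(1) K(1) Mx]])
  have "clsL (TyArr A E) (comp_tm A (comp_tm A M N) K) = clsL (TyArr A E) (comp_tm A M (comp_tm B N K))"
    by (rule clsL_extI[OF typing_comp[OF MN K(1)] typing_comp[OF M(1) NK]])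
       (rule beq_trans[OF 1 beq_sym[OF 2]])
  then show "Cmp Lam A D E h (Cmp Lam A B D g f) = Cmp Lam A B E (Cmp Lam B D E h g) f"
    using M N K by (simp add: L_cmp MN NK)
qed


lemma fst_pair_L: assumes F: "typing [] F (TyArr X A)" and G: "typing [] G (TyArr X B)"
  shows "clsL (TyArr X A) (comp_tm X (pairT X F G) (fstT A B)) = clsL (TyArr X A) F"
proof -
  have x: "typing [X] (TVar 0) X" by simp
  have Fx: "typing [X] (TApp F (TVar 0)) A" using F by (meson typing.t_app typing_closed x)
  have Gx: "typing [X] (TApp G (TVar 0)) B" using G by (meson typing.t_app typing_closed x)
  have PG: "typing [] (pairT X F G) (TyArr X (TyProd A B))" using F G by blast
  have 1: "beq [X] (TApp (comp_tm X (pairT X F G) (fstT A B)) (TVar 0)) (TApp (fstT A B) (TApp (pairT X F G) (TVar 0))) A"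
    using b_comp[OF PG typing_fstT x] .
  have 2: "beq [X] (TApp (fstT A B) (TApp (pairT X F G) (TVar 0))) (TApp (fstT A B) (TPair (TApp F (TVar 0)) (TApp G (TVar 0)))) A"
    using bapp2[OF typing_closed[OF typing_fstT] b_pair[OF F G x]] .
  have 3: "beq [X] (TApp (fstT A B) (TPair (TApp F (TVar 0)) (TApp G (TVar 0)))) (TFst (TPair (TApp F (TVar 0)) (TApp G (TVar 0)))) A"
    using b_fst[OF typing.t_pair[OF Fx Gx]] .
  have 4: "beq [X] (TFst (TPair (TApp F (TVar 0)) (TApp G (TVar 0)))) (TApp F (TVar 0)) A"
    using beq_fst_pair[OF Fx Gx] .
  show ?thesis
    by (rule clsL_extI[OF typing_comp[OF PG typing_fstT] F]) (meson 1 2 3 4 beq_trans)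
qed

lemma snd_pair_L: assumes F: "typing [] F (TyArr X A)" and G: "typing [] G (TyArr X B)"
  shows "clsL (TyArr X B) (comp_tm X (pairT X F G) (sndT A B)) = clsL (TyArr X B) G"
proof -
  have x: "typing [X] (TVar 0) X" by simp
  have Fx: "typing [X] (TApp F (TVar 0)) A" using F by (meson typing.t_app typing_closed x)
  have Gx: "typing [X] (TApp G (TVar 0)) B" using G by (meson typing.t_app typing_closed x)
  have PG: "typing [] (pairT X F G) (TyArr X (TyProd A B))" using F G by blast
  have 1: "beq [X] (TApp (comp_tm X (pairT X F G) (sndT A B)) (TVar 0)) (TApp (sndT A B) (TApp (pairT X F G) (TVar 0))) B"
    using b_comp[OF PG typing_sndT x] .
  have 2: "beq [X] (TApp (sndT A B) (TApp (pairT X F G) (TVar 0))) (TApp (sndT A B) (TPair (TApp F (TVar 0)) (TApp G (TVar 0)))) B"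
    using bapp2[OF typing_closed[OF typing_sndT] b_pair[OF F G x]] .
  have 3: "beq [X] (TApp (sndT A B) (TPair (TApp F (TVar 0)) (TApp G (TVar 0)))) (TSnd (TPair (TApp F (TVar 0)) (TApp G (TVar 0)))) B"
    using b_snd[OF typing.t_pair[OF Fx Gx]] .
  have 4: "beq [X] (TSnd (TPair (TApp F (TVar 0)) (TApp G (TVar 0)))) (TApp G (TVar 0)) B"
    using beq_snd_pair[OF Fx Gx] .
  show ?thesis
    by (rule clsL_extI[OF typing_comp[OF PG typing_sndT] G]) (meson 1 2 3 4 beq_trans)
qed

lemma pair_uniq_L: assumes F: "typing [] F (TyArr X A)" and G: "typing [] G (TyArr X B)"
  and H: "typing [] H (TyArr X (TyProd A B))"
  and e1: "clsL (TyArr X A) (comp_tm X H (fstT A B)) = clsL (TyArr X A) F"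
  and e2: "clsL (TyArr X B) (comp_tm X H (sndT A B)) = clsL (TyArr X B) G"
  shows "clsL (TyArr X (TyProd A B)) H = clsL (TyArr X (TyProd A B)) (pairT X F G)"
proof -
  have x: "typing [X] (TVar 0) X" by simp
  have Hx: "typing [X] (TApp H (TVar 0)) (TyProd A B)" using H by (meson typing.t_app typing_closed x)
  have PG: "typing [] (pairT X F G) (TyArr X (TyProd A B))" using F G by blast
  have b1: "beq [] (comp_tm X H (fstT A B)) F (TyArr X A)"
    using e1 clsL_eq_iff typing_comp[OF H typing_fstT] F by blast
  have b2: "beq [] (comp_tm X H (sndT A B)) G (TyArr X B)"
    using e2 clsL_eq_iff typing_comp[OF H typing_sndT] G by blast
  have f1: "beq [X] (TFst (TApp H (TVar 0))) (TApp F (TVar 0)) A"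
    by (meson beq_sym beq_trans b_fst[OF Hx] b_comp[OF H typing_fstT x] bapp1[OF beq_closed[OF b1] x])
  have f2: "beq [X] (TSnd (TApp H (TVar 0))) (TApp G (TVar 0)) B"
    by (meson beq_sym beq_trans b_snd[OF Hx] b_comp[OF H typing_sndT x] bapp1[OF beq_closed[OF b2] x])
  have "beq [X] (TApp H (TVar 0)) (TApp (pairT X F G) (TVar 0)) (TyProd A B)"
    by (meson beq_sym beq_trans beq_surj_pair[OF Hx] beq_pair[OF f1 f2] b_pair[OF F G x])
  then show ?thesis by (rule clsL_extI[OF H PG])
qed

lemma prodL: "is_product Lam A B (TyProd A B) (clsL (TyArr (TyProd A B) A) (fstT A B))
           (clsL (TyArr (TyProd A B) B) (sndT A B))"
  unfolding is_product_def
proof (intro conjI ballI)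
  show "TyProd A B \<in> Obj Lam" by simp
  show "clsL (TyArr (TyProd A B) A) (fstT A B) \<in> Hom Lam (TyProd A B) A" by (simp add: HomL_I)
  show "clsL (TyArr (TyProd A B) B) (sndT A B) \<in> Hom Lam (TyProd A B) B" by (simp add: HomL_I)
  fix X f g assume "f \<in> Hom Lam X A" "g \<in> Hom Lam X B"
  then obtain F G where F: "typing [] F (TyArr X A)" "f = clsL (TyArr X A) F"
    and G: "typing [] G (TyArr X B)" "g = clsL (TyArr X B) G" by (auto elim!: HomL_E)
  have FG: "typing [] (pairT X F G) (TyArr X (TyProd A B))" using F G by blast
  have c1: "Cmp Lam X (TyProd A B) A (clsL (TyArr (TyProd A B) A) (fstT A B)) (clsL (TyArr X (TyProd A B)) (pairT X F G)) = f"
    unfolding L_cmp[OF FG typing_fstT] F(2) using fst_pair_L[OF F(1) G(1)] .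
  have c2: "Cmp Lam X (TyProd A B) B (clsL (TyArr (TyProd A B) B) (sndT A B)) (clsL (TyArr X (TyProd A B)) (pairT X F G)) = g"
    unfolding L_cmp[OF FG typing_sndT] G(2) using snd_pair_L[OF F(1) G(1)] .
  show "\<exists>!h. h \<in> Hom Lam X (TyProd A B) \<and>
      Cmp Lam X (TyProd A B) A (clsL (TyArr (TyProd A B) A) (fstT A B)) h = f \<and>
      Cmp Lam X (TyProd A B) B (clsL (TyArr (TyProd A B) B) (sndT A B)) h = g"
  proof (rule ex1I[of _ "clsL (TyArr X (TyProd A B)) (pairT X F G)"])
    show "clsL (TyArr X (TyProd A B)) (pairT X F G) \<in> Hom Lam X (TyProd A B) \<and>
      Cmp Lam X (TyProd A B) A (clsL (TyArr (TyProd A B) A) (fstT A B)) (clsL (TyArr X (TyProd A B)) (pairT X F G)) = f \<and>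
      Cmp Lam X (TyProd A B) B (clsL (TyArr (TyProd A B) B) (sndT A B)) (clsL (TyArr X (TyProd A B)) (pairT X F G)) = g"
      using c1 c2 HomL_I[OF FG] by blast
    fix h assume h: "h \<in> Hom Lam X (TyProd A B) \<and>
      Cmp Lam X (TyProd A B) A (clsL (TyArr (TyProd A B) A) (fstT A B)) h = f \<and>
      Cmp Lam X (TyProd A B) B (clsL (TyArr (TyProd A B) B) (sndT A B)) h = g"
    then obtain H where H: "typing [] H (TyArr X (TyProd A B))" "h = clsL (TyArr X (TyProd A B)) H"
      by (auto elim: HomL_E)
    have e1: "clsL (TyArr X A) (comp_tm X H (fstT A B)) = clsL (TyArr X A) F"
      using h H F by (simp add: L_cmp)
    have e2: "clsL (TyArr X B) (comp_tm X H (sndT A B)) = clsL (TyArr X B) G"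
      using h H G by (simp add: L_cmp)
    show "h = clsL (TyArr X (TyProd A B)) (pairT X F G)"
      unfolding H(2) by (rule pair_uniq_L[OF F(1) G(1) H(1) e1 e2])
  qed
qed


lemma ex1_eqL: "\<exists>!x. P x \<Longrightarrow> P a \<Longrightarrow> P b \<Longrightarrow> a = b" by blast

lemma expL_data:
  assumes prodP: "is_product Lam E A P p1 p2" and ev: "ev \<in> Hom Lam P B"
  obtains v kv where "v \<in> Hom Lam E (TyArr A B)" "kv \<in> Hom Lam P (TyProd (TyArr A B) A)"
    "Cmp Lam P (TyProd (TyArr A B) A) (TyArr A B) (clsL (TyArr (TyProd (TyArr A B) A) (TyArr A B)) (fstT (TyArr A B) A)) kv
       = Cmp Lam P E (TyArr A B) v p1"
    "Cmp Lam P (TyProd (TyArr A B) A) A (clsL (TyArr (TyProd (TyArr A B) A) A) (sndT (TyArr A B) A)) kv = p2"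
    "Cmp Lam P (TyProd (TyArr A B) A) B (clsL (TyArr (TyProd (TyArr A B) A) B) (evT A B)) kv = ev"
proof -
  have p1: "p1 \<in> Hom Lam P E" and p2: "p2 \<in> Hom Lam P A" using prodP unfolding is_product_def by auto
  obtain P1 where P1: "typing [] P1 (TyArr P E)" "p1 = clsL (TyArr P E) P1" using p1 by (auto elim: HomL_E)
  obtain P2 where P2: "typing [] P2 (TyArr P A)" "p2 = clsL (TyArr P A) P2" using p2 by (auto elim: HomL_E)
  obtain Ev where Ev: "typing [] Ev (TyArr P B)" "ev = clsL (TyArr P B) Ev" using ev by (auto elim: HomL_E)
  have uP: "\<And>Y f g. f \<in> Hom Lam Y E \<Longrightarrow> g \<in> Hom Lam Y A \<Longrightarrow>
      \<exists>!h. h \<in> Hom Lam Y P \<and> Cmp Lam Y P E p1 h = f \<and> Cmp Lam Y P A p2 h = g"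
    using prodP unfolding is_product_def by auto
  obtain m where m: "m \<in> Hom Lam (TyProd E A) P"
    "Cmp Lam (TyProd E A) P E p1 m = clsL (TyArr (TyProd E A) E) (fstT E A)"
    "Cmp Lam (TyProd E A) P A p2 m = clsL (TyArr (TyProd E A) A) (sndT E A)"
    using uP[OF HomL_I[OF typing_fstT] HomL_I[OF typing_sndT]] by blast
  obtain Mm where Mm: "typing [] Mm (TyArr (TyProd E A) P)" "m = clsL (TyArr (TyProd E A) P) Mm"
    using m(1) by (auto elim: HomL_E)
  define PR where "PR = pairT P P1 P2"
  have PR: "typing [] PR (TyArr P (TyProd E A))" unfolding PR_def using P1 P2 by blast
  have prh: "clsL (TyArr P (TyProd E A)) PR \<in> Hom Lam P (TyProd E A)" using HomL_I[OF PR] .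
  have w1: "Cmp Lam P P E p1 (Cmp Lam P (TyProd E A) P m (clsL (TyArr P (TyProd E A)) PR)) = p1"
    using cat_assoc[OF Lam_cat _ _ _ _ prh m(1) p1] m(2) L_cmp[OF PR typing_fstT] fst_pair_L[OF P1(1) P2(1)] P1(2)
    by (simp add: PR_def)
  have w2: "Cmp Lam P P A p2 (Cmp Lam P (TyProd E A) P m (clsL (TyArr P (TyProd E A)) PR)) = p2"
    using cat_assoc[OF Lam_cat _ _ _ _ prh m(1) p2] m(3) L_cmp[OF PR typing_sndT] snd_pair_L[OF P1(1) P2(1)] P2(2)
    by (simp add: PR_def)
  have mpr: "Cmp Lam P (TyProd E A) P m (clsL (TyArr P (TyProd E A)) PR) = Idm Lam P"
  proof (rule ex1_eqL[OF uP[OF p1 p2]])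
    show "Cmp Lam P (TyProd E A) P m (clsL (TyArr P (TyProd E A)) PR) \<in> Hom Lam P P \<and>
      Cmp Lam P P E p1 (Cmp Lam P (TyProd E A) P m (clsL (TyArr P (TyProd E A)) PR)) = p1 \<and>
      Cmp Lam P P A p2 (Cmp Lam P (TyProd E A) P m (clsL (TyArr P (TyProd E A)) PR)) = p2"
      using w1 w2 cat_comp[OF Lam_cat _ _ _ prh m(1)] by simp
    show "Idm Lam P \<in> Hom Lam P P \<and> Cmp Lam P P E p1 (Idm Lam P) = p1 \<and> Cmp Lam P P A p2 (Idm Lam P) = p2"
      using cat_id[OF Lam_cat, of P] cat_idr[OF Lam_cat _ _ p1] cat_idr[OF Lam_cat _ _ p2] by simp
  qed
  define V where "V = curT E A Ev Mm"
  have V: "typing [] V (TyArr E (TyArr A B))" unfolding V_def using Ev Mm by blast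
  define C1 where "C1 = comp_tm P P1 V"
  have C1: "typing [] C1 (TyArr P (TyArr A B))" unfolding C1_def using P1 V by blast
  define Kv where "Kv = pairT P C1 P2"
  have Kv: "typing [] Kv (TyArr P (TyProd (TyArr A B) A))" unfolding Kv_def using C1 P2 by blast
  have k1: "Cmp Lam P (TyProd (TyArr A B) A) (TyArr A B) (clsL (TyArr (TyProd (TyArr A B) A) (TyArr A B)) (fstT (TyArr A B) A)) (clsL (TyArr P (TyProd (TyArr A B) A)) Kv)
       = Cmp Lam P E (TyArr A B) (clsL (TyArr E (TyArr A B)) V) p1"
  proof -
    have "Cmp Lam P (TyProd (TyArr A B) A) (TyArr A B) (clsL (TyArr (TyProd (TyArr A B) A) (TyArr A B)) (fstT (TyArr A B) A)) (clsL (TyArr P (TyProd (TyArr A B) A)) Kv)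
       = clsL (TyArr P (TyArr A B)) (comp_tm P Kv (fstT (TyArr A B) A))" by (rule L_cmp[OF Kv typing_fstT])
    also have "\<dots> = clsL (TyArr P (TyArr A B)) C1" unfolding Kv_def by (rule fst_pair_L[OF C1 P2(1)])
    also have "\<dots> = Cmp Lam P E (TyArr A B) (clsL (TyArr E (TyArr A B)) V) p1"
      unfolding P1(2) C1_def by (rule L_cmp[OF P1(1) V, symmetric])
    finally show ?thesis .
  qed
  have k2: "Cmp Lam P (TyProd (TyArr A B) A) A (clsL (TyArr (TyProd (TyArr A B) A) A) (sndT (TyArr A B) A)) (clsL (TyArr P (TyProd (TyArr A B) A)) Kv) = p2"
  proof -
    have "Cmp Lam P (TyProd (TyArr A B) A) A (clsL (TyArr (TyProd (TyArr A B) A) A) (sndT (TyArr A B) A)) (clsL (TyArr P (TyProd (TyArr A B) A)) Kv)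
       = clsL (TyArr P A) (comp_tm P Kv (sndT (TyArr A B) A))" by (rule L_cmp[OF Kv typing_sndT])
    also have "\<dots> = p2" unfolding Kv_def P2(2) by (rule snd_pair_L[OF C1 P2(1)])
    finally show ?thesis .
  qed
  have x: "typing [P] (TVar 0) P" by simp
  have P1x: "typing [P] (TApp P1 (TVar 0)) E" using P1(1) by (meson typing.t_app typing_closed x)
  have P2x: "typing [P] (TApp P2 (TVar 0)) A" using P2(1) by (meson typing.t_app typing_closed x)
  have C1x: "typing [P] (TApp C1 (TVar 0)) (TyArr A B)" using C1 by (meson typing.t_app typing_closed x)
  have PRx: "typing [P] (TPair (TApp P1 (TVar 0)) (TApp P2 (TVar 0))) (TyProd E A)" using P1x P2x by (rule typing.t_pair)
  have Cx: "typing [P] (TPair (TApp C1 (TVar 0)) (TApp P2 (TVar 0))) (TyProd (TyArr A B) A)" using C1x P2x by (rule typing.t_pair)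
  let ?G = "TApp Ev (TApp Mm (TPair (TApp P1 (TVar 0)) (TApp P2 (TVar 0))))"
  have l1: "beq [P] (TApp (comp_tm P Kv (evT A B)) (TVar 0)) (TApp (evT A B) (TApp Kv (TVar 0))) B"
    using b_comp[OF Kv typing_evT x] .
  have l2: "beq [P] (TApp (evT A B) (TApp Kv (TVar 0))) (TApp (evT A B) (TPair (TApp C1 (TVar 0)) (TApp P2 (TVar 0)))) B"
    unfolding Kv_def using bapp2[OF typing_closed[OF typing_evT] b_pair[OF C1 P2(1) x]] .
  have l3: "beq [P] (TApp (evT A B) (TPair (TApp C1 (TVar 0)) (TApp P2 (TVar 0))))
     (TApp (TFst (TPair (TApp C1 (TVar 0)) (TApp P2 (TVar 0)))) (TSnd (TPair (TApp C1 (TVar 0)) (TApp P2 (TVar 0))))) B"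
    using b_ev[OF Cx] .
  have l4: "beq [P] (TApp (TFst (TPair (TApp C1 (TVar 0)) (TApp P2 (TVar 0)))) (TSnd (TPair (TApp C1 (TVar 0)) (TApp P2 (TVar 0)))))
     (TApp (TApp C1 (TVar 0)) (TApp P2 (TVar 0))) B"
    using beq_app[OF beq_fst_pair[OF C1x P2x] beq_snd_pair[OF C1x P2x]] .
  have l5: "beq [P] (TApp (TApp C1 (TVar 0)) (TApp P2 (TVar 0))) (TApp (TApp V (TApp P1 (TVar 0))) (TApp P2 (TVar 0))) B"
    unfolding C1_def using bapp1[OF b_comp[OF P1(1) V x] P2x] .
  have l6: "beq [P] (TApp (TApp V (TApp P1 (TVar 0))) (TApp P2 (TVar 0))) ?G B"
    unfolding V_def using b_cur[OF Ev(1) Mm(1) P1x P2x] .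
  have L: "beq [P] (TApp (comp_tm P Kv (evT A B)) (TVar 0)) ?G B"
    by (meson l1 l2 l3 l4 l5 l6 beq_trans)
  have PRMm: "typing [] (comp_tm P PR Mm) (TyArr P P)" using PR Mm by blast
  have r1: "beq [P] (TApp (comp_tm P (comp_tm P PR Mm) Ev) (TVar 0)) (TApp Ev (TApp (comp_tm P PR Mm) (TVar 0))) B"
    using b_comp[OF PRMm Ev(1) x] .
  have r2: "beq [P] (TApp Ev (TApp (comp_tm P PR Mm) (TVar 0))) (TApp Ev (TApp Mm (TApp PR (TVar 0)))) B"
    using bapp2[OF typing_closed[OF Ev(1)] b_comp[OF PR Mm(1) x]] .
  have r3: "beq [P] (TApp Ev (TApp Mm (TApp PR (TVar 0)))) ?G B"
    unfolding PR_def using bapp2[OF typing_closed[OF Ev(1)] bapp2[OF typing_closed[OF Mm(1)] b_pair[OF P1(1) P2(1) x]]] .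
  have R: "beq [P] (TApp (comp_tm P (comp_tm P PR Mm) Ev) (TVar 0)) ?G B"
    by (meson r1 r2 r3 beq_trans)
  have "clsL (TyArr P B) (comp_tm P Kv (evT A B)) = clsL (TyArr P B) (comp_tm P (comp_tm P PR Mm) Ev)"
    by (rule clsL_extI[OF typing_comp[OF Kv typing_evT] typing_comp[OF PRMm Ev(1)]])
       (meson L R beq_sym beq_trans)
  also have "\<dots> = Cmp Lam P P B ev (Cmp Lam P (TyProd E A) P m (clsL (TyArr P (TyProd E A)) PR))"
    using Ev Mm L_cmp[OF PR Mm(1)] L_cmp[OF PRMm Ev(1)] by simp
  also have "\<dots> = ev" using mpr cat_idr[OF Lam_cat _ _ ev] by simp
  finally have k3: "Cmp Lam P (TyProd (TyArr A B) A) B (clsL (TyArr (TyProd (TyArr A B) A) B) (evT A B)) (clsL (TyArr P (TyProd (TyArr A B) A)) Kv) = ev"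
    unfolding L_cmp[OF Kv typing_evT] .
  show ?thesis by (rule that[OF HomL_I[OF V] HomL_I[OF Kv] k1 k2 k3])
qed


primrec rel :: "('a \<times> 'b) set \<Rightarrow> 'a set \<Rightarrow> 'b set \<Rightarrow> ty \<Rightarrow> ('a val \<times> 'b val) set" where
  "rel f Q Q' TyO = {(VB q, VB q') | q q'. (q, q') \<in> f}"
| "rel f Q Q' TyOne = {(VU, VU)}"
| "rel f Q Q' (TyProd A B) = {(VP a b, VP a' b') | a b a' b'. (a, a') \<in> rel f Q Q' A \<and> (b, b') \<in> rel f Q Q' B}"
| "rel f Q Q' (TyArr A B) = {(g, g') | g g'. g \<in> sdom Q (TyArr A B) \<and> g' \<in> sdom Q' (TyArr A B) \<and>
      (\<forall>a a'. (a, a') \<in> rel f Q Q' A \<longrightarrow> (vapp g a, vapp g' a') \<in> rel f Q Q' B)}"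

lemma rel_sdom: "f \<subseteq> Q \<times> Q' \<Longrightarrow> (x, y) \<in> rel f Q Q' T \<Longrightarrow> x \<in> sdom Q T \<and> y \<in> sdom Q' T"
proof (induction T arbitrary: x y)
  case TyO
  then show ?case by auto
next
  case TyOne
  then show ?case by auto
next
  case (TyProd A B)
  then show ?case by fastforce
next
  case (TyArr A B)
  then show ?case by (simp only: rel.simps) blast
qed

lemma graph_in_sdom: "finite Q \<Longrightarrow> (\<And>a. a \<in> sdom Q A \<Longrightarrow> h a \<in> sdom Q B) \<Longrightarrow>
  VF (Abs_fset ((\<lambda>a. (a, h a)) ` sdom Q A)) \<in> sdom Q (TyArr A B)"
  unfolding sdom.simps mem_Collect_eq
  by (intro exI[of _ "Abs_fset ((\<lambda>a. (a, h a)) ` sdom Q A)"] conjI refl exI[of _ h])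
     (simp_all add: fset_graph finite_sdom)

lemma sdom_arr_empty: "finite Q \<Longrightarrow> sdom Q (TyArr A B) = {} \<longleftrightarrow> (sdom Q A \<noteq> {} \<and> sdom Q B = {})"
proof
  assume fin: "finite Q" and e: "sdom Q (TyArr A B) = {}"
  show "sdom Q A \<noteq> {} \<and> sdom Q B = {}"
  proof (rule ccontr)
    assume "\<not> (sdom Q A \<noteq> {} \<and> sdom Q B = {})"
    then have "\<And>a. a \<in> sdom Q A \<Longrightarrow> (SOME b. b \<in> sdom Q B) \<in> sdom Q B"
      by (metis empty_iff some_in_eq)
    from graph_in_sdom[OF fin, of A "\<lambda>_. SOME b. b \<in> sdom Q B" B, OF this] e show False by (simp only: empty_iff)
  qed
next
  assume ab: "sdom Q A \<noteq> {} \<and> sdom Q B = {}"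
  show "sdom Q (TyArr A B) = {}"
  proof (rule equals0I)
    fix g assume g: "g \<in> sdom Q (TyArr A B)"
    obtain a where a: "a \<in> sdom Q A" using ab by blast
    have "vapp g a \<in> sdom Q B" by (rule vapp_in[OF g a])
    then show False using ab by simp
  qed
qed

lemma sdom_nonempty: "finite Q \<Longrightarrow> Q \<noteq> {} \<Longrightarrow> sdom Q T \<noteq> {}"
proof (induction T)
  case TyO
  then show ?case by simp
next
  case TyOne
  then show ?case by simp
next
  case (TyProd A B)
  then obtain a b where "a \<in> sdom Q A" "b \<in> sdom Q B" by blast
  then have "VP a b \<in> sdom Q (TyProd A B)" by simp
  then show ?case by blast
next
  case (TyArr A B)
  have "sdom Q B \<noteq> {}" using TyArr.IH(2)[OF TyArr.prems] .
  then show ?case using sdom_arr_empty[OF TyArr.prems(1), of A B] by simp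
qed

lemma sdom_empty_iff: "finite Q \<Longrightarrow> finite Q' \<Longrightarrow> (Q = {} \<longleftrightarrow> Q' = {}) \<Longrightarrow>
  (sdom Q T = {} \<longleftrightarrow> sdom Q' T = {})"
proof (induction T)
  case TyO
  then show ?case by simp
next
  case TyOne
  then show ?case by simp
next
  case (TyProd A B)
  have "sdom Q (TyProd A B) = {} \<longleftrightarrow> sdom Q A = {} \<or> sdom Q B = {}" by auto
  moreover have "sdom Q' (TyProd A B) = {} \<longleftrightarrow> sdom Q' A = {} \<or> sdom Q' B = {}" by auto
  ultimately show ?case using TyProd.IH[OF TyProd.prems] by simp
next
  case (TyArr A B)
  then show ?case using sdom_arr_empty[of Q A B] sdom_arr_empty[of Q' A B] by simp
qed

locale psurj =
  fixes f :: "('a \<times> 'b) set" and Q :: "'a set" and Q' :: "'b set"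
  assumes fin: "finite Q" and fin': "finite Q'" and ps: "partial_surj f Q Q'"
begin

lemma sub: "f \<subseteq> Q \<times> Q'" and sv: "single_valued f" and rng: "Range f = Q'"
  using ps unfolding partial_surj_def by auto

lemma rsdom: "(x, y) \<in> rel f Q Q' T \<Longrightarrow> x \<in> sdom Q T \<and> y \<in> sdom Q' T"
  using rel_sdom[OF sub] .

lemma nonempty_B: "a \<in> sdom Q A \<Longrightarrow> g' \<in> sdom Q' (TyArr A B) \<Longrightarrow> sdom Q B \<noteq> {}"
proof -
  assume a: "a \<in> sdom Q A" and g': "g' \<in> sdom Q' (TyArr A B)"
  show ?thesis
  proof (cases "Q = {}")
    case False
    then show ?thesis using sdom_nonempty fin by blast
  next
    case True
    then have "Q' = {}" using sub rng by auto
    then have iff: "\<And>T. sdom Q T = {} \<longleftrightarrow> sdom Q' T = {}" using True sdom_empty_iff fin fin' by blast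
    have "sdom Q' A \<noteq> {}" using iff a by blast
    then have "sdom Q' B \<noteq> {}" using g' vapp_in by blast
    then show ?thesis using iff by blast
  qed
qed

lemma rel_fun_surj:
  "(\<forall>x y y'. (x, y) \<in> rel f Q Q' T \<longrightarrow> (x, y') \<in> rel f Q Q' T \<longrightarrow> y = y') \<and>
   (\<forall>y\<in>sdom Q' T. \<exists>x. (x, y) \<in> rel f Q Q' T)"
proof (induction T)
  case TyO
  show ?case
  proof (intro conjI allI impI ballI)
    fix x y y' assume "(x, y) \<in> rel f Q Q' TyO" "(x, y') \<in> rel f Q Q' TyO"
    then show "y = y'" using sv by (auto dest: single_valuedD)
  next
    fix y assume "y \<in> sdom Q' TyO"
    then obtain q' where "y = VB q'" "q' \<in> Q'" by auto
    then obtain q where "(q, q') \<in> f" using rng by auto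
    then show "\<exists>x. (x, y) \<in> rel f Q Q' TyO" using \<open>y = VB q'\<close> by auto
  qed
next
  case TyOne
  then show ?case by auto
next
  case (TyProd A B)
  show ?case
  proof (intro conjI allI impI ballI)
    fix x y y' assume "(x, y) \<in> rel f Q Q' (TyProd A B)" "(x, y') \<in> rel f Q Q' (TyProd A B)"
    then show "y = y'" using TyProd.IH by auto
  next
    fix y assume "y \<in> sdom Q' (TyProd A B)"
    then obtain a' b' where y: "y = VP a' b'" "a' \<in> sdom Q' A" "b' \<in> sdom Q' B" by auto
    then obtain a b where "(a, a') \<in> rel f Q Q' A" "(b, b') \<in> rel f Q Q' B" using TyProd.IH by blast
    then show "\<exists>x. (x, y) \<in> rel f Q Q' (TyProd A B)" using y by auto
  qed
next
  case (TyArr A B)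
  have funA: "\<And>x y y'. (x, y) \<in> rel f Q Q' A \<Longrightarrow> (x, y') \<in> rel f Q Q' A \<Longrightarrow> y = y'"
    and surA: "\<And>y. y \<in> sdom Q' A \<Longrightarrow> \<exists>x. (x, y) \<in> rel f Q Q' A"
    and funB: "\<And>x y y'. (x, y) \<in> rel f Q Q' B \<Longrightarrow> (x, y') \<in> rel f Q Q' B \<Longrightarrow> y = y'"
    and surB: "\<And>y. y \<in> sdom Q' B \<Longrightarrow> \<exists>x. (x, y) \<in> rel f Q Q' B"
    using TyArr.IH by blast+
  show ?case
  proof (intro conjI allI impI ballI)
    fix g g1 g2 assume r1: "(g, g1) \<in> rel f Q Q' (TyArr A B)" and r2: "(g, g2) \<in> rel f Q Q' (TyArr A B)"
    have g1: "g1 \<in> sdom Q' (TyArr A B)" and g2: "g2 \<in> sdom Q' (TyArr A B)" using r1 r2 by auto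
    show "g1 = g2"
    proof (rule arr_ext[OF g1 g2])
      fix a' assume "a' \<in> sdom Q' A"
      then obtain a where a: "(a, a') \<in> rel f Q Q' A" using surA by blast
      have "(vapp g a, vapp g1 a') \<in> rel f Q Q' B" "(vapp g a, vapp g2 a') \<in> rel f Q Q' B"
        using r1 r2 a by auto
      then show "vapp g1 a' = vapp g2 a'" using funB by blast
    qed
  next
    fix g' assume g': "g' \<in> sdom Q' (TyArr A B)"
    define h where "h = (\<lambda>a. if \<exists>a'. (a, a') \<in> rel f Q Q' A
        then SOME b. (b, vapp g' (THE a'. (a, a') \<in> rel f Q Q' A)) \<in> rel f Q Q' B
        else SOME b. b \<in> sdom Q B)"
    have hrel: "(h a, vapp g' a') \<in> rel f Q Q' B" if aa: "(a, a') \<in> rel f Q Q' A" for a a'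
    proof -
      have the: "(THE a'. (a, a') \<in> rel f Q Q' A) = a'" using aa funA by blast
      have "vapp g' a' \<in> sdom Q' B" using vapp_in[OF g'] rsdom[OF aa] by blast
      then obtain b where "(b, vapp g' a') \<in> rel f Q Q' B" using surB by blast
      then have "(SOME b. (b, vapp g' a') \<in> rel f Q Q' B, vapp g' a') \<in> rel f Q Q' B" by (rule someI)
      then show ?thesis unfolding h_def using aa the by auto
    qed
    have hin: "h a \<in> sdom Q B" if a: "a \<in> sdom Q A" for a
    proof (cases "\<exists>a'. (a, a') \<in> rel f Q Q' A")
      case True
      then obtain a' where "(a, a') \<in> rel f Q Q' A" by blast
      then show ?thesis using hrel rsdom by blast
    next
      case False
      have "sdom Q B \<noteq> {}" using nonempty_B[OF a g'] .
      then have "(SOME b. b \<in> sdom Q B) \<in> sdom Q B" by (simp add: some_in_eq)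
      then show ?thesis unfolding h_def using False by simp
    qed
    define g where "g = VF (Abs_fset ((\<lambda>a. (a, h a)) ` sdom Q A))"
    have g: "g \<in> sdom Q (TyArr A B)" unfolding g_def by (rule graph_in_sdom[OF fin hin])
    have "(g, g') \<in> rel f Q Q' (TyArr A B)"
    proof -
      have "\<forall>a a'. (a, a') \<in> rel f Q Q' A \<longrightarrow> (vapp g a, vapp g' a') \<in> rel f Q Q' B"
      proof (intro allI impI)
        fix a a' assume aa: "(a, a') \<in> rel f Q Q' A"
        have "vapp g a = h a" unfolding g_def using vapp_VF_graph[OF fin] rsdom[OF aa] by blast
        then show "(vapp g a, vapp g' a') \<in> rel f Q Q' B" using hrel[OF aa] by simp
      qed
      then show ?thesis using g g' by (simp only: rel.simps) blast
    qed
    then show "\<exists>x. (x, g') \<in> rel f Q Q' (TyArr A B)" by blast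
  qed
qed

lemma rel_fun: "(x, y) \<in> rel f Q Q' T \<Longrightarrow> (x, y') \<in> rel f Q Q' T \<Longrightarrow> y = y'"
  using rel_fun_surj[of T] by (elim conjE) (erule allE, erule allE, erule allE, erule impE, assumption, erule impE, assumption, assumption)

lemma fundamental:
  "typing \<Gamma> M T \<Longrightarrow> length \<rho> = length \<Gamma> \<Longrightarrow> length \<rho>' = length \<Gamma> \<Longrightarrow>
   (\<forall>i<length \<Gamma>. (\<rho> ! i, \<rho>' ! i) \<in> rel f Q Q' (\<Gamma> ! i)) \<Longrightarrow>
   (eval M Q \<rho>, eval M Q' \<rho>') \<in> rel f Q Q' T"
proof (induction arbitrary: \<rho> \<rho>' rule: typing.induct)
  case (t_var i \<Gamma>)
  then show ?case by simp
next
  case (t_abs A \<Gamma> M B)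
  have env: "env Q \<rho> \<Gamma>" "env Q' \<rho>' \<Gamma>" using t_abs.prems rsdom unfolding env_def by auto
  have ty: "typing \<Gamma> (TAbs A M) (TyArr A B)" using t_abs.hyps by (rule typing.t_abs)
  have s1: "eval (TAbs A M) Q \<rho> \<in> sdom Q (TyArr A B)" using eval_sound[OF fin ty env(1)] .
  have s2: "eval (TAbs A M) Q' \<rho>' \<in> sdom Q' (TyArr A B)" using eval_sound[OF fin' ty env(2)] .
  have "\<forall>a a'. (a, a') \<in> rel f Q Q' A \<longrightarrow>
      (vapp (eval (TAbs A M) Q \<rho>) a, vapp (eval (TAbs A M) Q' \<rho>') a') \<in> rel f Q Q' B"
  proof (intro allI impI)
    fix a a' assume aa: "(a, a') \<in> rel f Q Q' A"
    have "(eval M Q (a # \<rho>), eval M Q' (a' # \<rho>')) \<in> rel f Q Q' B"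
      using t_abs.IH[of "a # \<rho>" "a' # \<rho>'"] t_abs.prems aa by (auto simp: nth_Cons split: nat.split)
    then show "(vapp (eval (TAbs A M) Q \<rho>) a, vapp (eval (TAbs A M) Q' \<rho>') a') \<in> rel f Q Q' B"
      using vapp_abs[OF fin] vapp_abs[OF fin'] rsdom[OF aa] by metis
  qed
  then show ?case using s1 s2 by (simp only: rel.simps) blast
next
  case (t_app \<Gamma> M A B N)
  have "(eval M Q \<rho>, eval M Q' \<rho>') \<in> rel f Q Q' (TyArr A B)" by (rule t_app.IH(1)[OF t_app.prems])
  then have H: "\<And>a a'. (a, a') \<in> rel f Q Q' A \<Longrightarrow> (vapp (eval M Q \<rho>) a, vapp (eval M Q' \<rho>') a') \<in> rel f Q Q' B"
    by simp
  have "(eval N Q \<rho>, eval N Q' \<rho>') \<in> rel f Q Q' A" by (rule t_app.IH(2)[OF t_app.prems])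
  then show ?case using H by simp
next
  case (t_unit \<Gamma>)
  then show ?case by simp
next
  case (t_pair \<Gamma> M A N B)
  then show ?case by simp
next
  case (t_fst \<Gamma> M A B)
  from t_fst.IH[OF t_fst.prems] obtain a b a' b' where "eval M Q \<rho> = VP a b" "eval M Q' \<rho>' = VP a' b'"
    "(a, a') \<in> rel f Q Q' A" by auto
  then show ?case by simp
next
  case (t_snd \<Gamma> M A B)
  from t_snd.IH[OF t_snd.prems] obtain a b a' b' where "eval M Q \<rho> = VP a b" "eval M Q' \<rho>' = VP a' b'"
    "(b, b') \<in> rel f Q Q' B" by auto
  then show ?case by simp
qed

lemma sem_rel: "typing [] M T \<Longrightarrow> (sem Q M, sem Q' M) \<in> rel f Q Q' T"
  unfolding sem_def using fundamental[of "[]" M T "[]" "[]"] by simp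

lemma sem_transfer: "typing [] M T \<Longrightarrow> typing [] N T \<Longrightarrow> sem Q M = sem Q N \<Longrightarrow> sem Q' M = sem Q' N"
  using sem_rel[of M T] sem_rel[of N T] rel_fun by metis

end


lemma cc_functor_I:
  assumes "is_functor C D id F"
    and "\<And>T. is_terminal C T \<Longrightarrow> is_terminal D T"
    and "\<And>A B P p1 p2. is_product C A B P p1 p2 \<Longrightarrow> is_product D A B P (F P A p1) (F P B p2)"
    and "\<And>A B E P p1 p2 ev. is_exponential C A B E P p1 p2 ev \<Longrightarrow>
           is_exponential D A B E P (F P E p1) (F P A p2) (F P B ev)"
  shows "cc_functor C D id F"
  unfolding cc_functor_def using assms by simp

lemma beq_sem: "finite Q \<Longrightarrow> beq [] M N T \<Longrightarrow> sem Q M = sem Q N"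
  unfolding sem_def using beq_sound[of Q "[]" M N T "[]"] by simp

lemma piQ_cls: assumes fin: "finite Q" and M: "typing [] M (TyArr A B)"
  shows "piQ Q A B (clsL (TyArr A B) M) = clsQ Q (TyArr A B) M"
proof (rule set_eqI)
  fix N
  show "N \<in> piQ Q A B (clsL (TyArr A B) M) \<longleftrightarrow> N \<in> clsQ Q (TyArr A B) M"
  proof
    assume "N \<in> piQ Q A B (clsL (TyArr A B) M)"
    then obtain M' where "beq [] M M' (TyArr A B)" "simQ Q (TyArr A B) M' N"
      by (auto simp: piQ_def clsL_def)
    then show "N \<in> clsQ Q (TyArr A B) M" using beq_sem[OF fin] M by (auto simp: clsQ_def simQ_def)
  next
    assume "N \<in> clsQ Q (TyArr A B) M"
    moreover have "M \<in> clsL (TyArr A B) M" using M by (simp add: clsL_def beq_refl)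
    ultimately show "N \<in> piQ Q A B (clsL (TyArr A B) M)" by (auto simp: piQ_def clsQ_def)
  qed
qed

lemma fst_pair_Q: assumes fin: "finite Q" and F: "typing [] F (TyArr X A)" and G: "typing [] G (TyArr X B)"
  shows "clsQ Q (TyArr X A) (comp_tm X (pairT X F G) (fstT A B)) = clsQ Q (TyArr X A) F"
proof -
  have FG: "typing [] (pairT X F G) (TyArr X (TyProd A B))" using F G by blast
  show ?thesis
    by (rule clsQ_eqI[OF fin typing_comp[OF FG typing_fstT] F])
       (simp add: ap_comp[OF fin] ap_pair[OF fin] ap_fst[OF fin] clI[OF F] clI[OF G] clI[OF FG] ap_in[OF fin F] ap_in[OF fin G])
qed

lemma snd_pair_Q: assumes fin: "finite Q" and F: "typing [] F (TyArr X A)" and G: "typing [] G (TyArr X B)"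
  shows "clsQ Q (TyArr X B) (comp_tm X (pairT X F G) (sndT A B)) = clsQ Q (TyArr X B) G"
proof -
  have FG: "typing [] (pairT X F G) (TyArr X (TyProd A B))" using F G by blast
  show ?thesis
    by (rule clsQ_eqI[OF fin typing_comp[OF FG typing_sndT] G])
       (simp add: ap_comp[OF fin] ap_pair[OF fin] ap_snd[OF fin] clI[OF F] clI[OF G] clI[OF FG] ap_in[OF fin F] ap_in[OF fin G])
qed

lemma piQ_functor: assumes fin: "finite Q" shows "is_functor Lam (LamQ Q) id (piQ Q)"
  unfolding is_functor_def
proof (intro conjI ballI)
  show "is_category Lam" by (rule Lam_cat)
  show "is_category (LamQ Q)" by (rule LamQ_cat[OF fin])
  fix A show "id A \<in> Obj (LamQ Q)" by simp
  show "piQ Q A A (Idm Lam A) = Idm (LamQ Q) (id A)"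
    by (simp add: Lam_Idm LamQ_Idm piQ_cls[OF fin])
next
  fix A B f assume "f \<in> Hom Lam A B"
  then obtain M where "typing [] M (TyArr A B)" "f = clsL (TyArr A B) M" by (auto elim: HomL_E)
  then show "piQ Q A B f \<in> Hom (LamQ Q) (id A) (id B)" by (simp add: piQ_cls[OF fin] HomQ_I)
next
  fix A B E f g assume "f \<in> Hom Lam A B" "g \<in> Hom Lam B E"
  then obtain M N where M: "typing [] M (TyArr A B)" "f = clsL (TyArr A B) M"
    and N: "typing [] N (TyArr B E)" "g = clsL (TyArr B E) N" by (auto elim!: HomL_E)
  then show "piQ Q A E (Cmp Lam A B E g f) = Cmp (LamQ Q) (id A) (id B) (id E) (piQ Q B E g) (piQ Q A B f)"
    by (simp add: L_cmp piQ_cls[OF fin] Q_cmp[OF fin] typing_comp[OF M(1) N(1)])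
qed

lemma piQ_term: assumes fin: "finite Q" and T: "is_terminal Lam T" shows "is_terminal (LamQ Q) T"
  unfolding is_terminal_def
proof (intro conjI ballI)
  show "T \<in> Obj (LamQ Q)" by simp
  fix X
  have u: "\<exists>!h. h \<in> Hom Lam X T" using T unfolding is_terminal_def by simp
  then obtain h where "h \<in> Hom Lam X T" by blast
  then obtain M where M: "typing [] M (TyArr X T)" by (auto elim: HomL_E)
  show "\<exists>!h. h \<in> Hom (LamQ Q) X T"
  proof (rule ex1I[of _ "clsQ Q (TyArr X T) M"])
    show "clsQ Q (TyArr X T) M \<in> Hom (LamQ Q) X T" using HomQ_I[OF M] .
    fix h' assume "h' \<in> Hom (LamQ Q) X T"
    then obtain M' where M': "typing [] M' (TyArr X T)" "h' = clsQ Q (TyArr X T) M'" by (auto elim: HomQ_E)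
    have "clsL (TyArr X T) M' = clsL (TyArr X T) M" using u HomL_I[OF M] HomL_I[OF M'(1)] by blast
    then have "beq [] M' M (TyArr X T)" using clsL_eq_iff M M'(1) by blast
    then have "sem Q M' = sem Q M" using beq_sem[OF fin] by blast
    then show "h' = clsQ Q (TyArr X T) M" using M'(2) clsQ_eq_iff M M'(1) by blast
  qed
qed

lemma piQ_prod: assumes fin: "finite Q" and prodP: "is_product Lam A B P p1 p2"
  shows "is_product (LamQ Q) A B P (piQ Q P A p1) (piQ Q P B p2)"
proof -
  have p1: "p1 \<in> Hom Lam P A" and p2: "p2 \<in> Hom Lam P B" using prodP unfolding is_product_def by auto
  obtain P1 where P1: "typing [] P1 (TyArr P A)" "p1 = clsL (TyArr P A) P1" using p1 by (auto elim: HomL_E)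
  obtain P2 where P2: "typing [] P2 (TyArr P B)" "p2 = clsL (TyArr P B) P2" using p2 by (auto elim: HomL_E)
  have PR: "typing [] (pairT P P1 P2) (TyArr P (TyProd A B))" using P1 P2 by blast
  show ?thesis
  proof (rule prod_pres[OF Lam_cat LamQ_cat[OF fin] piQ_functor[OF fin] Lam_Obj LamQ_Obj prodP
        HomL_I[OF typing_fstT] HomL_I[OF typing_sndT] HomL_I[OF PR]])
    show "Cmp Lam P (TyProd A B) A (clsL (TyArr (TyProd A B) A) (fstT A B)) (clsL (TyArr P (TyProd A B)) (pairT P P1 P2)) = p1"
      by (simp add: L_cmp[OF PR] fst_pair_L[OF P1(1) P2(1)] P1(2))
    show "Cmp Lam P (TyProd A B) B (clsL (TyArr (TyProd A B) B) (sndT A B)) (clsL (TyArr P (TyProd A B)) (pairT P P1 P2)) = p2"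
      by (simp add: L_cmp[OF PR] snd_pair_L[OF P1(1) P2(1)] P2(2))
    show "is_product (LamQ Q) A B (TyProd A B) (piQ Q (TyProd A B) A (clsL (TyArr (TyProd A B) A) (fstT A B)))
       (piQ Q (TyProd A B) B (clsL (TyArr (TyProd A B) B) (sndT A B)))"
      by (simp add: piQ_cls[OF fin] prodQ[OF fin])
  qed
qed

lemma piQ_exp: assumes fin: "finite Q" and expE: "is_exponential Lam A B E P p1 p2 ev"
  shows "is_exponential (LamQ Q) A B E P (piQ Q P E p1) (piQ Q P A p2) (piQ Q P B ev)"
proof -
  have prodE: "is_product Lam E A P p1 p2" and ev: "ev \<in> Hom Lam P B"
    using expE unfolding is_exponential_def by auto
  obtain v kv where v: "v \<in> Hom Lam E (TyArr A B)" and kv: "kv \<in> Hom Lam P (TyProd (TyArr A B) A)"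
    and kv1: "Cmp Lam P (TyProd (TyArr A B) A) (TyArr A B) (clsL (TyArr (TyProd (TyArr A B) A) (TyArr A B)) (fstT (TyArr A B) A)) kv
       = Cmp Lam P E (TyArr A B) v p1"
    and kv2: "Cmp Lam P (TyProd (TyArr A B) A) A (clsL (TyArr (TyProd (TyArr A B) A) A) (sndT (TyArr A B) A)) kv = p2"
    and kv3: "Cmp Lam P (TyProd (TyArr A B) A) B (clsL (TyArr (TyProd (TyArr A B) A) B) (evT A B)) kv = ev"
    using expL_data[OF prodE ev] by blast
  have expD: "is_exponential (LamQ Q) A B (TyArr A B) (TyProd (TyArr A B) A)
     (piQ Q (TyProd (TyArr A B) A) (TyArr A B) (clsL (TyArr (TyProd (TyArr A B) A) (TyArr A B)) (fstT (TyArr A B) A)))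
     (piQ Q (TyProd (TyArr A B) A) A (clsL (TyArr (TyProd (TyArr A B) A) A) (sndT (TyArr A B) A)))
     (piQ Q (TyProd (TyArr A B) A) B (clsL (TyArr (TyProd (TyArr A B) A) B) (evT A B)))"
    by (simp add: piQ_cls[OF fin] expQ[OF fin])
  show ?thesis
    by (rule exp_pres[OF Lam_cat LamQ_cat[OF fin] piQ_functor[OF fin] Lam_Obj LamQ_Obj
          piQ_prod[OF fin] expE prodL HomL_I[OF typing_evT] expD v kv kv1 kv2 kv3])
qed

lemma part1: "finite Q \<Longrightarrow> cartesian_closed (LamQ Q) \<and> cc_functor Lam (LamQ Q) id (piQ Q)"
  using LamQ_ccc cc_functor_I[OF piQ_functor piQ_term piQ_prod piQ_exp] by blast


context psurj
begin

lemma F_cls: assumes M: "typing [] M (TyArr A B)"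
  shows "piQ Q' A B (clsQ Q (TyArr A B) M) = clsQ Q' (TyArr A B) M"
proof (rule set_eqI)
  fix N
  show "N \<in> piQ Q' A B (clsQ Q (TyArr A B) M) \<longleftrightarrow> N \<in> clsQ Q' (TyArr A B) M"
  proof
    assume "N \<in> piQ Q' A B (clsQ Q (TyArr A B) M)"
    then obtain M' where "M' \<in> clsQ Q (TyArr A B) M" "simQ Q' (TyArr A B) M' N"
      by (auto simp: piQ_def)
    then have M': "typing [] M' (TyArr A B)" "sem Q M = sem Q M'" "typing [] N (TyArr A B)" "sem Q' M' = sem Q' N"
      by (auto simp: clsQ_def simQ_def)
    have "sem Q' M = sem Q' M'" by (rule sem_transfer[OF M M'(1,2)])
    then show "N \<in> clsQ Q' (TyArr A B) M" using M M' by (simp add: clsQ_def simQ_def)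
  next
    assume "N \<in> clsQ Q' (TyArr A B) M"
    moreover have "M \<in> clsQ Q (TyArr A B) M" using M by (simp add: clsQ_def simQ_def)
    ultimately show "N \<in> piQ Q' A B (clsQ Q (TyArr A B) M)" by (auto simp: piQ_def clsQ_def)
  qed
qed

lemma F_functor: "is_functor (LamQ Q) (LamQ Q') id (piQ Q')"
  unfolding is_functor_def
proof (intro conjI ballI)
  show "is_category (LamQ Q)" by (rule LamQ_cat[OF fin])
  show "is_category (LamQ Q')" by (rule LamQ_cat[OF fin'])
  fix A show "id A \<in> Obj (LamQ Q')" by simp
  show "piQ Q' A A (Idm (LamQ Q) A) = Idm (LamQ Q') (id A)"
    by (simp add: LamQ_Idm F_cls)
next
  fix A B f assume "f \<in> Hom (LamQ Q) A B"
  then obtain M where "typing [] M (TyArr A B)" "f = clsQ Q (TyArr A B) M" by (auto elim: HomQ_E)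
  then show "piQ Q' A B f \<in> Hom (LamQ Q') (id A) (id B)" by (simp add: F_cls HomQ_I)
next
  fix A B E f g assume "f \<in> Hom (LamQ Q) A B" "g \<in> Hom (LamQ Q) B E"
  then obtain M N where M: "typing [] M (TyArr A B)" "f = clsQ Q (TyArr A B) M"
    and N: "typing [] N (TyArr B E)" "g = clsQ Q (TyArr B E) N" by (auto elim!: HomQ_E)
  then show "piQ Q' A E (Cmp (LamQ Q) A B E g f) = Cmp (LamQ Q') (id A) (id B) (id E) (piQ Q' B E g) (piQ Q' A B f)"
    by (simp add: Q_cmp[OF fin] Q_cmp[OF fin'] F_cls typing_comp[OF M(1) N(1)])
qed

lemma F_term: assumes T: "is_terminal (LamQ Q) T" shows "is_terminal (LamQ Q') T"
  unfolding is_terminal_def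
proof (intro conjI ballI)
  show "T \<in> Obj (LamQ Q')" by simp
  fix X
  have u: "\<exists>!h. h \<in> Hom (LamQ Q) X T" using T unfolding is_terminal_def by simp
  then obtain h where "h \<in> Hom (LamQ Q) X T" by blast
  then obtain M where M: "typing [] M (TyArr X T)" by (auto elim: HomQ_E)
  show "\<exists>!h. h \<in> Hom (LamQ Q') X T"
  proof (rule ex1I[of _ "clsQ Q' (TyArr X T) M"])
    show "clsQ Q' (TyArr X T) M \<in> Hom (LamQ Q') X T" using HomQ_I[OF M] .
    fix h' assume "h' \<in> Hom (LamQ Q') X T"
    then obtain M' where M': "typing [] M' (TyArr X T)" "h' = clsQ Q' (TyArr X T) M'" by (auto elim: HomQ_E)
    have "clsQ Q (TyArr X T) M' = clsQ Q (TyArr X T) M" using u HomQ_I[OF M] HomQ_I[OF M'(1)] by blast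
    then have "sem Q M' = sem Q M" using clsQ_eq_iff M M'(1) by blast
    then have "sem Q' M' = sem Q' M" by (rule sem_transfer[OF M'(1) M])
    then show "h' = clsQ Q' (TyArr X T) M" using M'(2) clsQ_eq_iff M M'(1) by blast
  qed
qed

lemma F_prod: assumes prodP: "is_product (LamQ Q) A B P p1 p2"
  shows "is_product (LamQ Q') A B P (piQ Q' P A p1) (piQ Q' P B p2)"
proof -
  have p1: "p1 \<in> Hom (LamQ Q) P A" and p2: "p2 \<in> Hom (LamQ Q) P B" using prodP unfolding is_product_def by auto
  obtain P1 where P1: "typing [] P1 (TyArr P A)" "p1 = clsQ Q (TyArr P A) P1" using p1 by (auto elim: HomQ_E)
  obtain P2 where P2: "typing [] P2 (TyArr P B)" "p2 = clsQ Q (TyArr P B) P2" using p2 by (auto elim: HomQ_E)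
  have PR: "typing [] (pairT P P1 P2) (TyArr P (TyProd A B))" using P1 P2 by blast
  show ?thesis
  proof (rule prod_pres[OF LamQ_cat[OF fin] LamQ_cat[OF fin'] F_functor LamQ_Obj LamQ_Obj prodP
        HomQ_I[OF typing_fstT] HomQ_I[OF typing_sndT] HomQ_I[OF PR]])
    show "Cmp (LamQ Q) P (TyProd A B) A (clsQ Q (TyArr (TyProd A B) A) (fstT A B)) (clsQ Q (TyArr P (TyProd A B)) (pairT P P1 P2)) = p1"
      by (simp add: Q_cmp[OF fin PR] fst_pair_Q[OF fin P1(1) P2(1)] P1(2))
    show "Cmp (LamQ Q) P (TyProd A B) B (clsQ Q (TyArr (TyProd A B) B) (sndT A B)) (clsQ Q (TyArr P (TyProd A B)) (pairT P P1 P2)) = p2"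
      by (simp add: Q_cmp[OF fin PR] snd_pair_Q[OF fin P1(1) P2(1)] P2(2))
    show "is_product (LamQ Q') A B (TyProd A B) (piQ Q' (TyProd A B) A (clsQ Q (TyArr (TyProd A B) A) (fstT A B)))
       (piQ Q' (TyProd A B) B (clsQ Q (TyArr (TyProd A B) B) (sndT A B)))"
      by (simp add: F_cls prodQ[OF fin'])
  qed
qed

lemma F_exp: assumes expE: "is_exponential (LamQ Q) A B E P p1 p2 ev"
  shows "is_exponential (LamQ Q') A B E P (piQ Q' P E p1) (piQ Q' P A p2) (piQ Q' P B ev)"
proof -
  have prodE: "is_product (LamQ Q) E A P p1 p2" and ev: "ev \<in> Hom (LamQ Q) P B"
    using expE unfolding is_exponential_def by auto
  have "\<exists>!h. h \<in> Hom (LamQ Q) E (TyArr A B) \<and>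
     (\<exists>k\<in>Hom (LamQ Q) P (TyProd (TyArr A B) A).
        Cmp (LamQ Q) P (TyProd (TyArr A B) A) (TyArr A B) (clsQ Q (TyArr (TyProd (TyArr A B) A) (TyArr A B)) (fstT (TyArr A B) A)) k
          = Cmp (LamQ Q) P E (TyArr A B) h p1 \<and>
        Cmp (LamQ Q) P (TyProd (TyArr A B) A) A (clsQ Q (TyArr (TyProd (TyArr A B) A) A) (sndT (TyArr A B) A)) k = p2 \<and>
        Cmp (LamQ Q) P (TyProd (TyArr A B) A) B (clsQ Q (TyArr (TyProd (TyArr A B) A) B) (evT A B)) k = ev)"
    using expQ[OF fin, of A B] unfolding is_exponential_def
    apply (elim conjE)
    apply (drule bspec[of _ _ E], simp)
    apply (drule spec[of _ P], drule spec[of _ p1], drule spec[of _ p2])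
    apply (drule mp[OF _ prodE])
    apply (drule bspec[OF _ ev])
    apply assumption
    done
  then obtain v kv where v: "v \<in> Hom (LamQ Q) E (TyArr A B)" and kv: "kv \<in> Hom (LamQ Q) P (TyProd (TyArr A B) A)"
    and kv1: "Cmp (LamQ Q) P (TyProd (TyArr A B) A) (TyArr A B) (clsQ Q (TyArr (TyProd (TyArr A B) A) (TyArr A B)) (fstT (TyArr A B) A)) kv
       = Cmp (LamQ Q) P E (TyArr A B) v p1"
    and kv2: "Cmp (LamQ Q) P (TyProd (TyArr A B) A) A (clsQ Q (TyArr (TyProd (TyArr A B) A) A) (sndT (TyArr A B) A)) kv = p2"
    and kv3: "Cmp (LamQ Q) P (TyProd (TyArr A B) A) B (clsQ Q (TyArr (TyProd (TyArr A B) A) B) (evT A B)) kv = ev"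
    by blast
  have expD: "is_exponential (LamQ Q') A B (TyArr A B) (TyProd (TyArr A B) A)
     (piQ Q' (TyProd (TyArr A B) A) (TyArr A B) (clsQ Q (TyArr (TyProd (TyArr A B) A) (TyArr A B)) (fstT (TyArr A B) A)))
     (piQ Q' (TyProd (TyArr A B) A) A (clsQ Q (TyArr (TyProd (TyArr A B) A) A) (sndT (TyArr A B) A)))
     (piQ Q' (TyProd (TyArr A B) A) B (clsQ Q (TyArr (TyProd (TyArr A B) A) B) (evT A B)))"
    by (simp add: F_cls expQ[OF fin'])
  show ?thesis
    by (rule exp_pres[OF LamQ_cat[OF fin] LamQ_cat[OF fin'] F_functor LamQ_Obj LamQ_Obj
          F_prod expE prodQ[OF fin] HomQ_I[OF typing_evT] expD v kv kv1 kv2 kv3])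
qed

lemma F_comm: assumes c: "c \<in> Hom Lam A B" shows "piQ Q' A B (piQ Q A B c) = piQ Q' A B c"
proof -
  obtain M where M: "typing [] M (TyArr A B)" "c = clsL (TyArr A B) M" using c by (auto elim: HomL_E)
  show ?thesis unfolding M(2) piQ_cls[OF fin M(1)] piQ_cls[OF fin' M(1)] F_cls[OF M(1)] ..
qed

lemma part2: "\<exists>F. cc_functor (LamQ Q) (LamQ Q') id F \<and>
                 (\<forall>A B. \<forall>c\<in>Hom Lam A B. F A B (piQ Q A B c) = piQ Q' A B c)"
proof (rule exI[of _ "piQ Q'"], rule conjI)
  show "cc_functor (LamQ Q) (LamQ Q') id (piQ Q')" by (rule cc_functor_I[OF F_functor F_term F_prod F_exp])
  show "\<forall>A B. \<forall>c\<in>Hom Lam A B. piQ Q' A B (piQ Q A B c) = piQ Q' A B c" using F_comm by blast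
qed

end

theorem mainTheorem9:
  shows "(\<forall>Q :: 'a set. finite Q \<longrightarrow>
            cartesian_closed (LamQ Q) \<and> cc_functor Lam (LamQ Q) id (piQ Q)) \<and>
         (\<forall>(Q :: 'a set) (Q' :: 'b set) (f :: ('a \<times> 'b) set).
            finite Q \<longrightarrow> finite Q' \<longrightarrow> partial_surj f Q Q' \<longrightarrow>
            (\<exists>F. cc_functor (LamQ Q) (LamQ Q') id F \<and>
                 (\<forall>A B. \<forall>c\<in>Hom Lam A B. F A B (piQ Q A B c) = piQ Q' A B c)))"
proof (rule conjI)
  show "\<forall>Q :: 'a set. finite Q \<longrightarrow> cartesian_closed (LamQ Q) \<and> cc_functor Lam (LamQ Q) id (piQ Q)"
    using part1 by blast
  show "\<forall>(Q :: 'a set) (Q' :: 'b set) (f :: ('a \<times> 'b) set).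
            finite Q \<longrightarrow> finite Q' \<longrightarrow> partial_surj f Q Q' \<longrightarrow>
            (\<exists>F. cc_functor (LamQ Q) (LamQ Q') id F \<and>
                 (\<forall>A B. \<forall>c\<in>Hom Lam A B. F A B (piQ Q A B c) = piQ Q' A B c))"
  proof (intro allI impI)
    fix Q :: "'a set" and Q' :: "'b set" and f :: "('a \<times> 'b) set"
    assume "finite Q" "finite Q'" "partial_surj f Q Q'"
    then interpret psurj f Q Q' by unfold_locales
    show "\<exists>F. cc_functor (LamQ Q) (LamQ Q') id F \<and>
                 (\<forall>A B. \<forall>c\<in>Hom Lam A B. F A B (piQ Q A B c) = piQ Q' A B c)" by (rule part2)
  qed
qed

end
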